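(* Let $M,N$ be locally free $\widehat H$-modules with $\operatorname{Ext}^1_{\widehat H}(M,N)=0$. Then the natural map $\mathbb{F}\otimes_{\mathbb{F}[[\epsilon]]}\operatorname{Hom}_{\widehat H}(M,N)\to\operatorname{Hom}_H(\operatorname{Red}(M),\operatorname{Red}(N))$ is an isomorphism of $\mathbb{F}$-vector spaces.
   Context: Setup for $H$. Let $I=\{1,\dots,n\}$ and let $C=(c_{ij})\in\mathbb{Z}^{I\times I}$ be a symmetrizable generalized Cartan matrix with symmetrizer $D=\operatorname{diag}(c_1,\dots,c_n)$, $c_i\in\mathbb{Z}_{>0}$, $DC$ symmetric. An orientation $\Omega\subset I\times I$ contains, for each pair $i\ne j$ with $c_{ij}<0$, exactly one of $(i,j),(j,i)$, and nothing else; we assume $(i,j)\in\Omega\Rightarrow i<j$. For $c_{ij}<0$ set $g_{ij}=\gcd(c_{ij},c_{ji})$, $f_{ij}=-c_{ij}/g_{ij}$. For a field $\mathbb{F}$ let $H_i=\mathbb{F}[\varepsilon_i]/(\varepsilon_i^{c_i})$, $S=\prod_{i\in I}H_i$; for $(i,j)\in\Omega$ let ${}_iH'_j$ be the $H_i$-$H_j$-bimodule generated by $\alpha_{ij}$ subject to $\varepsilon_i^{f_{ji}}\alpha_{ij}=\alpha_{ij}\varepsilon_j^{f_{ij}}$, ${}_iH_j=({}_iH'_j)^{g_{ij}}$, and $H=T_S(\bigoplus_{(i,j)\in\Omega}{}_iH_j)$. Setup for $\widehat H$. Let $c=\operatorname{lcm}(c_i)$, $R=\mathbb{F}[[\epsilon]]$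 (with $\mathbb{F}=R/\epsilon R$); inside $\mathbb{F}((\epsilon^{1/c}))$ put $\epsilon_i=\epsilon^{1/c_i}$. Let $\widehat S=\prod_i\mathbb{F}[[\epsilon_i]]$, ${}_i\widehat H_j=(\mathbb{F}[[\epsilon_i,\epsilon_j]])^{g_{ij}}$, $\widehat H=T_{\widehat S}(\bigoplus_{(i,j)\in\Omega}{}_i\widehat H_j)$, an $R$-algebra via $\epsilon\mapsto(\epsilon_i^{c_i})_i$; $\widehat H/\epsilon\widehat H\cong H$ and $\operatorname{Red}(M)=H\otimes_{\widehat H}M=M/\epsilon M$. An $\widehat H$-module is locally free if each $e_iM$ is free over $\mathbb{F}[[\epsilon_i]]$. *)

theory Defs
  imports "HOL-Algebra.Module" "HOL-Algebra.FiniteProduct"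
          "HOL-Computational_Algebra.Formal_Power_Series"
begin

definition Iset :: "nat \<Rightarrow> nat set" where
  "Iset n = {1..n}"

definition cartan_setup ::
  "nat \<Rightarrow> (nat \<Rightarrow> nat \<Rightarrow> int) \<Rightarrow> (nat \<Rightarrow> nat) \<Rightarrow> (nat \<times> nat) set \<Rightarrow> bool" where
  "cartan_setup n C cs Om \<longleftrightarrow>
     \<comment> \<open>generalized Cartan matrix\<close>
     (\<forall>i\<in>Iset n. C i i = 2) \<and>
     (\<forall>i\<in>Iset n. \<forall>j\<in>Iset n. i \<noteq> j \<longrightarrow> C i j \<le> 0) \<and>
     (\<forall>i\<in>Iset n. \<forall>j\<in>Iset n. C i j = 0 \<longleftrightarrow> C j i = 0) \<and>
     \<comment> \<open>symmetrizer D = diag(c_1,...,c_n), c_i > 0, DC symmetric\<close>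
     (\<forall>i\<in>Iset n. cs i > 0) \<and>
     (\<forall>i\<in>Iset n. \<forall>j\<in>Iset n. int (cs i) * C i j = int (cs j) * C j i) \<and>
     \<comment> \<open>orientation, with (i,j) in Om implies i < j\<close>
     Om \<subseteq> Iset n \<times> Iset n \<and>
     (\<forall>(i,j)\<in>Om. i < j \<and> C i j < 0) \<and>
     (\<forall>i\<in>Iset n. \<forall>j\<in>Iset n. i \<noteq> j \<and> C i j < 0 \<longrightarrow>
        ((i,j) \<in> Om \<longleftrightarrow> (j,i) \<notin> Om))"

definition gg :: "(nat \<Rightarrow> nat \<Rightarrow> int) \<Rightarrow> nat \<Rightarrow> nat \<Rightarrow> nat" where
  "gg C i j = nat (gcd (C i j) (C j i))"

definition clcm :: "nat \<Rightarrow> (nat \<Rightarrow> nat) \<Rightarrow> nat" where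
  "clcm n cs = Lcm (cs ` Iset n)"

text \<open>We model F[[eps^(1/c)]] (nonnegative part of F((eps^(1/c)))) as 'f fps in the
  variable t = eps^(1/c).  Then eps_i = eps^(1/c_i) = t^(c/c_i) and eps = t^c.
  The ring F[[eps_i]] is identified with 'f fps in the variable eps_i (= fps_X);
  its embedding into F[[t]] is p \<mapsto> p(t^(c/c_i)).\<close>

definition fps_ring :: "'f::field fps ring" where
  "fps_ring = \<lparr>carrier = UNIV, monoid.mult = (*), monoid.one = 1, zero = 0, add = (+)\<rparr>"

definition emb :: "nat \<Rightarrow> (nat \<Rightarrow> nat) \<Rightarrow> nat \<Rightarrow> 'f::field fps \<Rightarrow> 'f fps" where
  "emb n cs i p = fps_compose p (fps_X ^ (clcm n cs div cs i))"

text \<open>F[[eps_i, eps_j]]: power series in t supported on the monoid generated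
  by the exponents c/c_i and c/c_j of eps_i and eps_j.\<close>
definition Rij :: "nat \<Rightarrow> (nat \<Rightarrow> nat) \<Rightarrow> nat \<Rightarrow> nat \<Rightarrow> 'f::field fps set" where
  "Rij n cs i j = {x. \<forall>k. fps_nth x k \<noteq> 0 \<longrightarrow>
      (\<exists>a b. k = a * (clcm n cs div cs i) + b * (clcm n cs div cs j))}"

text \<open>A module over the tensor algebra T_S(B), S = prod_i F[[eps_i]],
  B = bigoplus_{(i,j) in Om} iHj with iHj = F[[eps_i,eps_j]]^(g_ij), is an S-module
  M = bigoplus_i e_i M (each e_i M an F[[eps_i]]-module) together with, for each
  (i,j) in Om and each of the g_ij summands k, a map
  bet i j k : F[[eps_i,eps_j]] x e_j M \<rightarrow> e_i M that is biadditive and balanced,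
  i.e. a left F[[eps_i]]-linear map iHj \<otimes>_{F[[eps_j]]} e_j M \<rightarrow> e_i M.\<close>

record ('f, 'v) hmod =
  cmp :: "nat \<Rightarrow> ('f fps, 'v) module"
  bet :: "nat \<Rightarrow> nat \<Rightarrow> nat \<Rightarrow> 'f fps \<Rightarrow> 'v \<Rightarrow> 'v"

definition is_hmod ::
  "nat \<Rightarrow> (nat \<Rightarrow> nat \<Rightarrow> int) \<Rightarrow> (nat \<Rightarrow> nat) \<Rightarrow> (nat \<times> nat) set \<Rightarrow>
   ('f::field, 'v) hmod \<Rightarrow> bool" where
  "is_hmod n C cs Om M \<longleftrightarrow>
     (\<forall>i\<in>Iset n. Module.module fps_ring (cmp M i)) \<and>
     (\<forall>(i,j)\<in>Om. \<forall>k<gg C i j.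
        (\<forall>x\<in>Rij n cs i j. \<forall>m\<in>carrier (cmp M j).
            bet M i j k x m \<in> carrier (cmp M i)) \<and>
        (\<forall>x\<in>Rij n cs i j. \<forall>y\<in>Rij n cs i j. \<forall>m\<in>carrier (cmp M j).
            bet M i j k (x + y) m = add (cmp M i) (bet M i j k x m) (bet M i j k y m)) \<and>
        (\<forall>x\<in>Rij n cs i j. \<forall>m\<in>carrier (cmp M j). \<forall>m'\<in>carrier (cmp M j).
            bet M i j k x (add (cmp M j) m m') =
              add (cmp M i) (bet M i j k x m) (bet M i j k x m')) \<and>
        (\<forall>x\<in>Rij n cs i j. \<forall>m\<in>carrier (cmp M j). \<forall>r.
            bet M i j k (emb n cs i r * x) m = smult (cmp M i) r (bet M i j k x m)) \<and>
        (\<forall>x\<in>Rij n cs i j. \<forall>m\<in>carrier (cmp M j). \<forall>r.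
            bet M i j k (x * emb n cs j r) m = bet M i j k x (smult (cmp M j) r m)))"

definition is_hom ::
  "nat \<Rightarrow> (nat \<Rightarrow> nat \<Rightarrow> int) \<Rightarrow> (nat \<Rightarrow> nat) \<Rightarrow> (nat \<times> nat) set \<Rightarrow>
   ('f::field, 'v) hmod \<Rightarrow> ('f, 'w) hmod \<Rightarrow> (nat \<Rightarrow> 'v \<Rightarrow> 'w) \<Rightarrow> bool" where
  "is_hom n C cs Om M N f \<longleftrightarrow>
     (\<forall>i\<in>Iset n.
        (\<forall>m\<in>carrier (cmp M i). f i m \<in> carrier (cmp N i)) \<and>
        (\<forall>m\<in>carrier (cmp M i). \<forall>m'\<in>carrier (cmp M i).
            f i (add (cmp M i) m m') = add (cmp N i) (f i m) (f i m')) \<and>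
        (\<forall>m\<in>carrier (cmp M i). \<forall>r.
            f i (smult (cmp M i) r m) = smult (cmp N i) r (f i m))) \<and>
     (\<forall>(i,j)\<in>Om. \<forall>k<gg C i j. \<forall>x\<in>Rij n cs i j. \<forall>m\<in>carrier (cmp M j).
        f i (bet M i j k x m) = bet N i j k x (f j m))"

text \<open>Action of eps = eps_i^(c_i) on e_i M.\<close>
definition eps_act :: "(nat \<Rightarrow> nat) \<Rightarrow> ('f::field, 'v) hmod \<Rightarrow> nat \<Rightarrow> 'v \<Rightarrow> 'v" where
  "eps_act cs M i m = smult (cmp M i) (fps_X ^ cs i) m"

definition free_module :: "('f::field fps, 'v) module \<Rightarrow> bool" where
  "free_module Mi \<longleftrightarrow>
     (\<exists>B \<subseteq> carrier Mi. \<forall>m\<in>carrier Mi. \<exists>!c::'v \<Rightarrow> 'f fps.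
        finite {b\<in>B. c b \<noteq> 0} \<and> (\<forall>b. b \<notin> B \<longrightarrow> c b = 0) \<and>
        m = finsum Mi (\<lambda>b. smult Mi (c b) b) {b\<in>B. c b \<noteq> 0})"

definition locally_free :: "nat \<Rightarrow> ('f::field, 'v) hmod \<Rightarrow> bool" where
  "locally_free n M \<longleftrightarrow> (\<forall>i\<in>Iset n. free_module (cmp M i))"

text \<open>Ext^1 = 0: every extension 0 \<rightarrow> N \<rightarrow> E \<rightarrow> M \<rightarrow> 0 of \<open>\<widehat>H\<close>-modules splits.
  Up to isomorphism of extensions, every extension has underlying sets
  e_i E = e_i N \<times> e_i M with inclusion n \<mapsto> (n,0) and projection (n,m) \<mapsto> m.\<close>
definition ext1_zero ::
  "nat \<Rightarrow> (nat \<Rightarrow> nat \<Rightarrow> int) \<Rightarrow> (nat \<Rightarrow> nat) \<Rightarrow> (nat \<times> nat) set \<Rightarrow>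
   ('f::field, 'm) hmod \<Rightarrow> ('f, 'n) hmod \<Rightarrow> bool" where
  "ext1_zero n C cs Om M N \<longleftrightarrow>
     (\<forall>E :: ('f, 'n \<times> 'm) hmod.
        is_hmod n C cs Om E \<and>
        (\<forall>i\<in>Iset n. carrier (cmp E i) = carrier (cmp N i) \<times> carrier (cmp M i)) \<and>
        is_hom n C cs Om N E (\<lambda>i x. (x, zero (cmp M i))) \<and>
        is_hom n C cs Om E M (\<lambda>i p. snd p)
        \<longrightarrow> (\<exists>s. is_hom n C cs Om M E s \<and>
               (\<forall>i\<in>Iset n. \<forall>m\<in>carrier (cmp M i). snd (s i m) = m)))"

definition ecoset :: "(nat \<Rightarrow> nat) \<Rightarrow> ('f::field, 'v) hmod \<Rightarrow> nat \<Rightarrow> 'v \<Rightarrow> 'v set" where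
  "ecoset cs M i m = {add (cmp M i) m (eps_act cs M i x) | x. x \<in> carrier (cmp M i)}"

definition rep :: "'v set \<Rightarrow> 'v" where
  "rep A = (SOME a. a \<in> A)"

text \<open>Red(M) = M/eps M, an \<open>\<widehat>H\<close>-module annihilated by eps, i.e. an H-module
  (H = \<open>\<widehat>H\<close>/eps \<open>\<widehat>H\<close>).  Elements are the cosets m + eps e_i M.\<close>
definition Red :: "(nat \<Rightarrow> nat) \<Rightarrow> ('f::field, 'v) hmod \<Rightarrow> ('f, 'v set) hmod" where
  "Red cs M = \<lparr>cmp = (\<lambda>i. \<lparr>carrier = ecoset cs M i ` carrier (cmp M i),
                         monoid.mult = (\<lambda>_ _. undefined), monoid.one = undefined,
                         zero = ecoset cs M i (zero (cmp M i)),
                         add = (\<lambda>A B. ecoset cs M i (add (cmp M i) (rep A) (rep B))),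
                         smult = (\<lambda>r A. ecoset cs M i (smult (cmp M i) r (rep A)))\<rparr>),
               bet = (\<lambda>i j k x A. ecoset cs M i (bet M i j k x (rep A)))\<rparr>"

definition red_hom ::
  "(nat \<Rightarrow> nat) \<Rightarrow> ('f::field, 'n) hmod \<Rightarrow> (nat \<Rightarrow> 'm \<Rightarrow> 'n) \<Rightarrow> nat \<Rightarrow> 'm set \<Rightarrow> 'n set" where
  "red_hom cs N f i A = ecoset cs N i (f i (rep A))"

end

theory Submission
  imports Defs
begin

definition subprod :: "('r,'a) module \<Rightarrow> ('r,'b) module \<Rightarrow> ('a\<times>'b) set \<Rightarrow> ('r,'a\<times>'b) module" where
 "subprod A B S = \<lparr>carrier = S, monoid.mult = (\<lambda>_ _. undefined), monoid.one = undefined,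
    zero = (\<zero>\<^bsub>A\<^esub>, \<zero>\<^bsub>B\<^esub>), add = (\<lambda>p q. (fst p \<oplus>\<^bsub>A\<^esub> fst q, snd p \<oplus>\<^bsub>B\<^esub> snd q)),
    smult = (\<lambda>r p. (r \<odot>\<^bsub>A\<^esub> fst p, r \<odot>\<^bsub>B\<^esub> snd p))\<rparr>"

lemma module_neg_one:
  assumes "Module.module R A" "x \<in> carrier A"
  shows "(\<ominus>\<^bsub>R\<^esub> \<one>\<^bsub>R\<^esub>) \<odot>\<^bsub>A\<^esub> x \<oplus>\<^bsub>A\<^esub> x = \<zero>\<^bsub>A\<^esub>"
proof -
  interpret Module.module R A by fact
  have "(\<ominus>\<^bsub>R\<^esub> \<one>\<^bsub>R\<^esub>) \<odot>\<^bsub>A\<^esub> x \<oplus>\<^bsub>A\<^esub> x = (\<ominus>\<^bsub>R\<^esub> \<one>\<^bsub>R\<^esub>) \<odot>\<^bsub>A\<^esub> x \<oplus>\<^bsub>A\<^esub> \<one>\<^bsub>R\<^esub> \<odot>\<^bsub>A\<^esub> x"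
    using assms by simp
  also have "\<dots> = (\<ominus>\<^bsub>R\<^esub> \<one>\<^bsub>R\<^esub> \<oplus>\<^bsub>R\<^esub> \<one>\<^bsub>R\<^esub>) \<odot>\<^bsub>A\<^esub> x"
    using assms by (simp add: smult_l_distr)
  also have "\<dots> = \<zero>\<^bsub>A\<^esub>" using assms by (simp add: R.l_neg)
  finally show ?thesis .
qed

lemma module_subprod:
  assumes A: "Module.module R A" and B: "Module.module R B" and S: "S \<subseteq> carrier A \<times> carrier B"
    and z: "(\<zero>\<^bsub>A\<^esub>, \<zero>\<^bsub>B\<^esub>) \<in> S"
    and ad: "\<And>p q. p \<in> S \<Longrightarrow> q \<in> S \<Longrightarrow> (fst p \<oplus>\<^bsub>A\<^esub> fst q, snd p \<oplus>\<^bsub>B\<^esub> snd q) \<in> S"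
    and sm: "\<And>r p. r \<in> carrier R \<Longrightarrow> p \<in> S \<Longrightarrow> (r \<odot>\<^bsub>A\<^esub> fst p, r \<odot>\<^bsub>B\<^esub> snd p) \<in> S"
  shows "Module.module R (subprod A B S)"
proof -
  interpret A: Module.module R A by fact
  interpret B: Module.module R B by fact
  have SA: "p \<in> S \<Longrightarrow> fst p \<in> carrier A \<and> snd p \<in> carrier B" for p using S by auto
  show ?thesis
  proof (rule moduleI)
    show "cring R" by (rule A.is_cring)
    show "abelian_group (subprod A B S)"
    proof (rule abelian_groupI)
      fix x assume x: "x \<in> carrier (subprod A B S)"
      show "\<exists>y\<in>carrier (subprod A B S). y \<oplus>\<^bsub>subprod A B S\<^esub> x = \<zero>\<^bsub>subprod A B S\<^esub>"
        apply (rule bexI[of _ "((\<ominus>\<^bsub>R\<^esub> \<one>\<^bsub>R\<^esub>) \<odot>\<^bsub>A\<^esub> fst x, (\<ominus>\<^bsub>R\<^esub> \<one>\<^bsub>R\<^esub>) \<odot>\<^bsub>B\<^esub> snd x)"])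
        using x SA module_neg_one[OF A] module_neg_one[OF B] sm[of "\<ominus>\<^bsub>R\<^esub> \<one>\<^bsub>R\<^esub>" x] by (auto simp: subprod_def)
    qed (use SA z ad in \<open>auto simp: subprod_def A.a_ac B.a_ac prod_eq_iff\<close>)
  qed (use SA sm in \<open>auto simp: subprod_def A.smult_l_distr B.smult_l_distr A.smult_r_distr B.smult_r_distr A.smult_assoc1 B.smult_assoc1\<close>)
qed

definition transm :: "('r,'a) module \<Rightarrow> 'b set \<Rightarrow> ('b \<Rightarrow> 'a) \<Rightarrow> ('a \<Rightarrow> 'b) \<Rightarrow> ('r,'b) module" where
 "transm P X T Ti = \<lparr>carrier = X, monoid.mult = (\<lambda>_ _. undefined), monoid.one = undefined,
    zero = Ti \<zero>\<^bsub>P\<^esub>, add = (\<lambda>u v. Ti (T u \<oplus>\<^bsub>P\<^esub> T v)),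
    smult = (\<lambda>r u. Ti (r \<odot>\<^bsub>P\<^esub> T u))\<rparr>"

lemma module_transm:
  assumes P: "Module.module R P" and b1: "\<forall>u\<in>X. T u \<in> carrier P \<and> Ti (T u) = u"
    and b2: "\<forall>p\<in>carrier P. Ti p \<in> X \<and> T (Ti p) = p"
  shows "Module.module R (transm P X T Ti)"
proof -
  interpret P: Module.module R P by fact
  show ?thesis
  proof (rule moduleI)
    show "cring R" by (rule P.is_cring)
    show "abelian_group (transm P X T Ti)"
    proof (rule abelian_groupI, simp_all add: transm_def)
      show "\<And>x. x \<in> X \<Longrightarrow> \<exists>y\<in>X. Ti (T y \<oplus>\<^bsub>P\<^esub> T x) = Ti \<zero>\<^bsub>P\<^esub>"
      proof -
        fix x assume x: "x \<in> X"
        show "\<exists>y\<in>X. Ti (T y \<oplus>\<^bsub>P\<^esub> T x) = Ti \<zero>\<^bsub>P\<^esub>"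
          apply (rule bexI[of _ "Ti (\<ominus>\<^bsub>P\<^esub> T x)"])
          using x b1 b2 by (auto simp: P.l_neg)
      qed
    qed (use b1 b2 in \<open>auto simp: P.a_ac\<close>)
  qed (use b1 b2 in \<open>auto simp: transm_def P.smult_l_distr P.smult_r_distr P.smult_assoc1\<close>)
qed


definition transh :: "('f::field,'a) hmod \<Rightarrow> (nat \<Rightarrow> 'b set) \<Rightarrow> (nat \<Rightarrow> 'b \<Rightarrow> 'a) \<Rightarrow> (nat \<Rightarrow> 'a \<Rightarrow> 'b) \<Rightarrow> ('f,'b) hmod" where
 "transh P X T Ti = \<lparr>cmp = (\<lambda>i. transm (cmp P i) (X i) (T i) (Ti i)),
    bet = (\<lambda>i j k x u. Ti i (bet P i j k x (T j u)))\<rparr>"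

definition bijc :: "('f::field,'a) hmod \<Rightarrow> (nat \<Rightarrow> 'b set) \<Rightarrow> (nat \<Rightarrow> 'b \<Rightarrow> 'a) \<Rightarrow> (nat \<Rightarrow> 'a \<Rightarrow> 'b) \<Rightarrow> nat \<Rightarrow> bool" where
 "bijc P X T Ti i \<longleftrightarrow> (\<forall>u\<in>X i. T i u \<in> carrier (cmp P i) \<and> Ti i (T i u) = u) \<and>
    (\<forall>p\<in>carrier (cmp P i). Ti i p \<in> X i \<and> T i (Ti i p) = p)"

lemma is_hmod_transh:
  assumes P: "is_hmod n C cs Om P" and Om: "Om \<subseteq> Iset n \<times> Iset n"
    and bj: "\<forall>i\<in>Iset n. bijc P X T Ti i"
  shows "is_hmod n C cs Om (transh P X T Ti)"
  unfolding is_hmod_def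
proof (intro conjI ballI)
  fix i assume i: "i \<in> Iset n"
  show "Module.module fps_ring (cmp (transh P X T Ti) i)"
    unfolding transh_def using module_transm[of fps_ring "cmp P i" "X i" "T i" "Ti i"] P i bj
    by (auto simp: is_hmod_def bijc_def)
next
  fix ij assume ij: "ij \<in> Om"
  obtain i j where ijd: "ij = (i,j)" by (cases ij)
  have i: "i \<in> Iset n" and j: "j \<in> Iset n" using ij Om ijd by auto
  have bi: "bijc P X T Ti i" and bjj: "bijc P X T Ti j" using bj i j by auto
  have PP: "\<forall>k<gg C i j.
        (\<forall>x\<in>Rij n cs i j. \<forall>m\<in>carrier (cmp P j).
            bet P i j k x m \<in> carrier (cmp P i)) \<and>
        (\<forall>x\<in>Rij n cs i j. \<forall>y\<in>Rij n cs i j. \<forall>m\<in>carrier (cmp P j).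
            bet P i j k (x + y) m = add (cmp P i) (bet P i j k x m) (bet P i j k y m)) \<and>
        (\<forall>x\<in>Rij n cs i j. \<forall>m\<in>carrier (cmp P j). \<forall>m'\<in>carrier (cmp P j).
            bet P i j k x (add (cmp P j) m m') =
              add (cmp P i) (bet P i j k x m) (bet P i j k x m')) \<and>
        (\<forall>x\<in>Rij n cs i j. \<forall>m\<in>carrier (cmp P j). \<forall>r.
            bet P i j k (emb n cs i r * x) m = smult (cmp P i) r (bet P i j k x m)) \<and>
        (\<forall>x\<in>Rij n cs i j. \<forall>m\<in>carrier (cmp P j). \<forall>r.
            bet P i j k (x * emb n cs j r) m = bet P i j k x (smult (cmp P j) r m))"
    using P ij ijd unfolding is_hmod_def by blast
  have Pi: "Module.module fps_ring (cmp P i)" and Pj: "Module.module fps_ring (cmp P j)"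
    using P i j by (auto simp: is_hmod_def)
  interpret Pi: Module.module fps_ring "cmp P i" by fact
  interpret Pj: Module.module fps_ring "cmp P j" by fact
  have cr: "r \<in> carrier fps_ring" for r by (simp add: fps_ring_def)
  show "case ij of (i, j) \<Rightarrow> \<forall>k<gg C i j.
        (\<forall>x\<in>Rij n cs i j. \<forall>m\<in>carrier (cmp (transh P X T Ti) j).
            bet (transh P X T Ti) i j k x m \<in> carrier (cmp (transh P X T Ti) i)) \<and>
        (\<forall>x\<in>Rij n cs i j. \<forall>y\<in>Rij n cs i j. \<forall>m\<in>carrier (cmp (transh P X T Ti) j).
            bet (transh P X T Ti) i j k (x + y) m = add (cmp (transh P X T Ti) i) (bet (transh P X T Ti) i j k x m) (bet (transh P X T Ti) i j k y m)) \<and>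
        (\<forall>x\<in>Rij n cs i j. \<forall>m\<in>carrier (cmp (transh P X T Ti) j). \<forall>m'\<in>carrier (cmp (transh P X T Ti) j).
            bet (transh P X T Ti) i j k x (add (cmp (transh P X T Ti) j) m m') =
              add (cmp (transh P X T Ti) i) (bet (transh P X T Ti) i j k x m) (bet (transh P X T Ti) i j k x m')) \<and>
        (\<forall>x\<in>Rij n cs i j. \<forall>m\<in>carrier (cmp (transh P X T Ti) j). \<forall>r.
            bet (transh P X T Ti) i j k (emb n cs i r * x) m = smult (cmp (transh P X T Ti) i) r (bet (transh P X T Ti) i j k x m)) \<and>
        (\<forall>x\<in>Rij n cs i j. \<forall>m\<in>carrier (cmp (transh P X T Ti) j). \<forall>r.
            bet (transh P X T Ti) i j k (x * emb n cs j r) m = bet (transh P X T Ti) i j k x (smult (cmp (transh P X T Ti) j) r m))"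
    unfolding ijd prod.case
  proof (intro allI impI conjI ballI)
    fix k assume k: "k < gg C i j"
    note Pk = PP[rule_format, OF k]
    note bc = bi[unfolded bijc_def] bjj[unfolded bijc_def]
    show "bet (transh P X T Ti) i j k x m \<in> carrier (cmp (transh P X T Ti) i)"
      if "x \<in> Rij n cs i j" "m \<in> carrier (cmp (transh P X T Ti) j)" for x m
      using that bc Pk by (auto simp: transh_def transm_def)
    show "bet (transh P X T Ti) i j k (x + y) m = add (cmp (transh P X T Ti) i) (bet (transh P X T Ti) i j k x m) (bet (transh P X T Ti) i j k y m)"
      if "x \<in> Rij n cs i j" "y \<in> Rij n cs i j" "m \<in> carrier (cmp (transh P X T Ti) j)" for x y m
      using that bc Pk by (auto simp: transh_def transm_def)
    show "bet (transh P X T Ti) i j k x (add (cmp (transh P X T Ti) j) m m') =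
              add (cmp (transh P X T Ti) i) (bet (transh P X T Ti) i j k x m) (bet (transh P X T Ti) i j k x m')"
      if "x \<in> Rij n cs i j" "m \<in> carrier (cmp (transh P X T Ti) j)" "m' \<in> carrier (cmp (transh P X T Ti) j)" for x m m'
      using that bc Pk by (auto simp: transh_def transm_def)
    show "bet (transh P X T Ti) i j k (emb n cs i r * x) m = smult (cmp (transh P X T Ti) i) r (bet (transh P X T Ti) i j k x m)"
      if "x \<in> Rij n cs i j" "m \<in> carrier (cmp (transh P X T Ti) j)" for x m r
      using that bc Pk by (auto simp: transh_def transm_def)
    show "bet (transh P X T Ti) i j k (x * emb n cs j r) m = bet (transh P X T Ti) i j k x (smult (cmp (transh P X T Ti) j) r m)"
      if "x \<in> Rij n cs i j" "m \<in> carrier (cmp (transh P X T Ti) j)" for x m r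
    proof -
      have m: "T j m \<in> carrier (cmp P j)" using that bc by (auto simp: transh_def transm_def)
      have "r \<odot>\<^bsub>cmp P j\<^esub> T j m \<in> carrier (cmp P j)" using Pj.smult_closed[OF cr m] .
      then show ?thesis using that bc Pk m by (auto simp: transh_def transm_def)
    qed
  qed
qed


lemma hmod_module: "is_hmod n C cs Om P \<Longrightarrow> i \<in> Iset n \<Longrightarrow> Module.module fps_ring (cmp P i)"
  by (auto simp: is_hmod_def)

lemma fps_ring_carrier[simp]: "r \<in> carrier fps_ring"
  by (simp add: fps_ring_def)

lemma hmod_bet_closed: "is_hmod n C cs Om P \<Longrightarrow> (i,j) \<in> Om \<Longrightarrow> k < gg C i j \<Longrightarrow> x \<in> Rij n cs i j \<Longrightarrow>
   m \<in> carrier (cmp P j) \<Longrightarrow> bet P i j k x m \<in> carrier (cmp P i)"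
  unfolding is_hmod_def by fast


lemma is_homI:
  assumes "\<And>i m. i\<in>Iset n \<Longrightarrow> m\<in>carrier (cmp A i) \<Longrightarrow> f i m \<in> carrier (cmp B i)"
    and "\<And>i m m'. i\<in>Iset n \<Longrightarrow> m\<in>carrier (cmp A i) \<Longrightarrow> m'\<in>carrier (cmp A i) \<Longrightarrow>
           f i (m \<oplus>\<^bsub>cmp A i\<^esub> m') = f i m \<oplus>\<^bsub>cmp B i\<^esub> f i m'"
    and "\<And>i m r. i\<in>Iset n \<Longrightarrow> m\<in>carrier (cmp A i) \<Longrightarrow> f i (r \<odot>\<^bsub>cmp A i\<^esub> m) = r \<odot>\<^bsub>cmp B i\<^esub> f i m"
    and "\<And>i j k x m. (i,j)\<in>Om \<Longrightarrow> k < gg C i j \<Longrightarrow> x \<in> Rij n cs i j \<Longrightarrow> m \<in> carrier (cmp A j) \<Longrightarrow>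
           f i (bet A i j k x m) = bet B i j k x (f j m)"
  shows "is_hom n C cs Om A B f"
  using assms unfolding is_hom_def by auto

lemma is_homD:
  assumes "is_hom n C cs Om A B f"
  shows "\<And>i m. i\<in>Iset n \<Longrightarrow> m\<in>carrier (cmp A i) \<Longrightarrow> f i m \<in> carrier (cmp B i)"
    and "\<And>i m m'. i\<in>Iset n \<Longrightarrow> m\<in>carrier (cmp A i) \<Longrightarrow> m'\<in>carrier (cmp A i) \<Longrightarrow>
           f i (m \<oplus>\<^bsub>cmp A i\<^esub> m') = f i m \<oplus>\<^bsub>cmp B i\<^esub> f i m'"
    and "\<And>i m r. i\<in>Iset n \<Longrightarrow> m\<in>carrier (cmp A i) \<Longrightarrow> f i (r \<odot>\<^bsub>cmp A i\<^esub> m) = r \<odot>\<^bsub>cmp B i\<^esub> f i m"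
    and "\<And>i j k x m. (i,j)\<in>Om \<Longrightarrow> k < gg C i j \<Longrightarrow> x \<in> Rij n cs i j \<Longrightarrow> m \<in> carrier (cmp A j) \<Longrightarrow>
           f i (bet A i j k x m) = bet B i j k x (f j m)"
  using assms unfolding is_hom_def by auto

lemma is_hmodD:
  assumes "is_hmod n C cs Om P"
  shows "\<And>i. i \<in> Iset n \<Longrightarrow> Module.module fps_ring (cmp P i)"
    and "\<And>i j k x m. (i,j)\<in>Om \<Longrightarrow> k < gg C i j \<Longrightarrow> x \<in> Rij n cs i j \<Longrightarrow> m \<in> carrier (cmp P j) \<Longrightarrow>
           bet P i j k x m \<in> carrier (cmp P i)"
    and "\<And>i j k x y m. (i,j)\<in>Om \<Longrightarrow> k < gg C i j \<Longrightarrow> x \<in> Rij n cs i j \<Longrightarrow> y \<in> Rij n cs i j \<Longrightarrow> m \<in> carrier (cmp P j) \<Longrightarrow>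
           bet P i j k (x + y) m = bet P i j k x m \<oplus>\<^bsub>cmp P i\<^esub> bet P i j k y m"
    and "\<And>i j k x m m'. (i,j)\<in>Om \<Longrightarrow> k < gg C i j \<Longrightarrow> x \<in> Rij n cs i j \<Longrightarrow> m \<in> carrier (cmp P j) \<Longrightarrow> m' \<in> carrier (cmp P j) \<Longrightarrow>
           bet P i j k x (m \<oplus>\<^bsub>cmp P j\<^esub> m') = bet P i j k x m \<oplus>\<^bsub>cmp P i\<^esub> bet P i j k x m'"
    and "\<And>i j k x m r. (i,j)\<in>Om \<Longrightarrow> k < gg C i j \<Longrightarrow> x \<in> Rij n cs i j \<Longrightarrow> m \<in> carrier (cmp P j) \<Longrightarrow>
           bet P i j k (emb n cs i r * x) m = r \<odot>\<^bsub>cmp P i\<^esub> bet P i j k x m"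
    and "\<And>i j k x m r. (i,j)\<in>Om \<Longrightarrow> k < gg C i j \<Longrightarrow> x \<in> Rij n cs i j \<Longrightarrow> m \<in> carrier (cmp P j) \<Longrightarrow>
           bet P i j k (x * emb n cs j r) m = bet P i j k x (r \<odot>\<^bsub>cmp P j\<^esub> m)"
  apply (insert assms[unfolded is_hmod_def])
  apply ((drule conjunct2, drule bspec, assumption, simp) | (drule conjunct1, simp))+
  done

lemma is_hmodI:
  assumes "\<And>i. i \<in> Iset n \<Longrightarrow> Module.module fps_ring (cmp P i)"
    and "\<And>i j k x m. (i,j)\<in>Om \<Longrightarrow> k < gg C i j \<Longrightarrow> x \<in> Rij n cs i j \<Longrightarrow> m \<in> carrier (cmp P j) \<Longrightarrow>
           bet P i j k x m \<in> carrier (cmp P i)"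
    and "\<And>i j k x y m. (i,j)\<in>Om \<Longrightarrow> k < gg C i j \<Longrightarrow> x \<in> Rij n cs i j \<Longrightarrow> y \<in> Rij n cs i j \<Longrightarrow> m \<in> carrier (cmp P j) \<Longrightarrow>
           bet P i j k (x + y) m = bet P i j k x m \<oplus>\<^bsub>cmp P i\<^esub> bet P i j k y m"
    and "\<And>i j k x m m'. (i,j)\<in>Om \<Longrightarrow> k < gg C i j \<Longrightarrow> x \<in> Rij n cs i j \<Longrightarrow> m \<in> carrier (cmp P j) \<Longrightarrow> m' \<in> carrier (cmp P j) \<Longrightarrow>
           bet P i j k x (m \<oplus>\<^bsub>cmp P j\<^esub> m') = bet P i j k x m \<oplus>\<^bsub>cmp P i\<^esub> bet P i j k x m'"
    and "\<And>i j k x m r. (i,j)\<in>Om \<Longrightarrow> k < gg C i j \<Longrightarrow> x \<in> Rij n cs i j \<Longrightarrow> m \<in> carrier (cmp P j) \<Longrightarrow>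
           bet P i j k (emb n cs i r * x) m = r \<odot>\<^bsub>cmp P i\<^esub> bet P i j k x m"
    and "\<And>i j k x m r. (i,j)\<in>Om \<Longrightarrow> k < gg C i j \<Longrightarrow> x \<in> Rij n cs i j \<Longrightarrow> m \<in> carrier (cmp P j) \<Longrightarrow>
           bet P i j k (x * emb n cs j r) m = bet P i j k x (r \<odot>\<^bsub>cmp P j\<^esub> m)"
  shows "is_hmod n C cs Om P"
  unfolding is_hmod_def using assms by (intro conjI ballI; clarsimp)


lemma is_hom_comp:
  assumes f: "is_hom n C cs Om A B f" and g: "is_hom n C cs Om B D g" and Om: "Om \<subseteq> Iset n \<times> Iset n"
  shows "is_hom n C cs Om A D (\<lambda>i x. g i (f i x))"
proof (rule is_homI)
  note F = is_homD[OF f] and G = is_homD[OF g]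
  show "g i (f i m) \<in> carrier (cmp D i)" if "i \<in> Iset n" "m \<in> carrier (cmp A i)" for i m
    using that F G by blast
  show "g i (f i (m \<oplus>\<^bsub>cmp A i\<^esub> m')) = g i (f i m) \<oplus>\<^bsub>cmp D i\<^esub> g i (f i m')"
    if "i \<in> Iset n" "m \<in> carrier (cmp A i)" "m' \<in> carrier (cmp A i)" for i m m'
    using that F G by simp
  show "g i (f i (r \<odot>\<^bsub>cmp A i\<^esub> m)) = r \<odot>\<^bsub>cmp D i\<^esub> g i (f i m)"
    if "i \<in> Iset n" "m \<in> carrier (cmp A i)" for i m r
    using that F G by simp
  show "g i (f i (bet A i j k x m)) = bet D i j k x (g j (f j m))"
    if "(i,j)\<in>Om" "k < gg C i j" "x \<in> Rij n cs i j" "m \<in> carrier (cmp A j)" for i j k x m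
    using that F G Om by auto
qed

lemma is_hom_cong:
  assumes f: "is_hom n C cs Om A B f" and A: "is_hmod n C cs Om A" and Om: "Om \<subseteq> Iset n \<times> Iset n"
    and eq: "\<And>i m. i \<in> Iset n \<Longrightarrow> m \<in> carrier (cmp A i) \<Longrightarrow> g i m = f i m"
  shows "is_hom n C cs Om A B g"
proof (rule is_homI)
  note F = is_homD[OF f] and H = is_hmodD[OF A]
  show "g i m \<in> carrier (cmp B i)" if "i \<in> Iset n" "m \<in> carrier (cmp A i)" for i m
    using that F eq by simp
  show "g i (m \<oplus>\<^bsub>cmp A i\<^esub> m') = g i m \<oplus>\<^bsub>cmp B i\<^esub> g i m'"
    if i: "i \<in> Iset n" and "m \<in> carrier (cmp A i)" "m' \<in> carrier (cmp A i)" for i m m'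
  proof -
    interpret Module.module fps_ring "cmp A i" using H(1)[OF i] .
    show ?thesis using that F eq by simp
  qed
  show "g i (r \<odot>\<^bsub>cmp A i\<^esub> m) = r \<odot>\<^bsub>cmp B i\<^esub> g i m"
    if i: "i \<in> Iset n" and "m \<in> carrier (cmp A i)" for i m r
  proof -
    interpret Module.module fps_ring "cmp A i" using H(1)[OF i] .
    show ?thesis using that F eq by simp
  qed
  show "g i (bet A i j k x m) = bet B i j k x (g j m)"
    if "(i,j)\<in>Om" "k < gg C i j" "x \<in> Rij n cs i j" "m \<in> carrier (cmp A j)" for i j k x m
    using that F eq Om H(2) by auto
qed

lemma is_hom_into_transh:
  assumes h: "is_hom n C cs Om Q P h" and Om: "Om \<subseteq> Iset n \<times> Iset n"
    and bj: "\<forall>i\<in>Iset n. bijc P X T Ti i"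
  shows "is_hom n C cs Om Q (transh P X T Ti) (\<lambda>i q. Ti i (h i q))"
proof (rule is_homI)
  note F = is_homD[OF h]
  have B: "i \<in> Iset n \<Longrightarrow> (\<forall>u\<in>X i. T i u \<in> carrier (cmp P i) \<and> Ti i (T i u) = u) \<and>
    (\<forall>p\<in>carrier (cmp P i). Ti i p \<in> X i \<and> T i (Ti i p) = p)" for i using bj by (auto simp: bijc_def)
  show "Ti i (h i m) \<in> carrier (cmp (transh P X T Ti) i)" if "i \<in> Iset n" "m \<in> carrier (cmp Q i)" for i m
    using that F B by (auto simp: transh_def transm_def)
  show "Ti i (h i (m \<oplus>\<^bsub>cmp Q i\<^esub> m')) = Ti i (h i m) \<oplus>\<^bsub>cmp (transh P X T Ti) i\<^esub> Ti i (h i m')"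
    if "i \<in> Iset n" "m \<in> carrier (cmp Q i)" "m' \<in> carrier (cmp Q i)" for i m m'
    using that F B by (auto simp: transh_def transm_def)
  show "Ti i (h i (r \<odot>\<^bsub>cmp Q i\<^esub> m)) = r \<odot>\<^bsub>cmp (transh P X T Ti) i\<^esub> Ti i (h i m)"
    if "i \<in> Iset n" "m \<in> carrier (cmp Q i)" for i m r
    using that F B by (auto simp: transh_def transm_def)
  show "Ti i (h i (bet Q i j k x m)) = bet (transh P X T Ti) i j k x (Ti j (h j m))"
    if "(i,j)\<in>Om" "k < gg C i j" "x \<in> Rij n cs i j" "m \<in> carrier (cmp Q j)" for i j k x m
    using that F B Om by (auto simp: transh_def transm_def)
qed

lemma is_hom_from_transh:
  assumes h: "is_hom n C cs Om P Q h" and P: "is_hmod n C cs Om P" and Om: "Om \<subseteq> Iset n \<times> Iset n"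
    and bj: "\<forall>i\<in>Iset n. bijc P X T Ti i"
  shows "is_hom n C cs Om (transh P X T Ti) Q (\<lambda>i u. h i (T i u))"
proof (rule is_homI)
  note F = is_homD[OF h] and H = is_hmodD[OF P]
  have B: "i \<in> Iset n \<Longrightarrow> (\<forall>u\<in>X i. T i u \<in> carrier (cmp P i) \<and> Ti i (T i u) = u) \<and>
    (\<forall>p\<in>carrier (cmp P i). Ti i p \<in> X i \<and> T i (Ti i p) = p)" for i using bj by (auto simp: bijc_def)
  show "h i (T i m) \<in> carrier (cmp Q i)" if "i \<in> Iset n" "m \<in> carrier (cmp (transh P X T Ti) i)" for i m
    using that F B by (auto simp: transh_def transm_def)
  show "h i (T i (m \<oplus>\<^bsub>cmp (transh P X T Ti) i\<^esub> m')) = h i (T i m) \<oplus>\<^bsub>cmp Q i\<^esub> h i (T i m')"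
    if i: "i \<in> Iset n" and "m \<in> carrier (cmp (transh P X T Ti) i)" "m' \<in> carrier (cmp (transh P X T Ti) i)" for i m m'
  proof -
    interpret Module.module fps_ring "cmp P i" using H(1)[OF i] .
    show ?thesis using that F B by (auto simp: transh_def transm_def)
  qed
  show "h i (T i (r \<odot>\<^bsub>cmp (transh P X T Ti) i\<^esub> m)) = r \<odot>\<^bsub>cmp Q i\<^esub> h i (T i m)"
    if i: "i \<in> Iset n" and "m \<in> carrier (cmp (transh P X T Ti) i)" for i m r
  proof -
    interpret Module.module fps_ring "cmp P i" using H(1)[OF i] .
    show ?thesis using that F B by (auto simp: transh_def transm_def)
  qed
  show "h i (T i (bet (transh P X T Ti) i j k x m)) = bet Q i j k x (h j (T j m))"
    if "(i,j)\<in>Om" "k < gg C i j" "x \<in> Rij n cs i j" "m \<in> carrier (cmp (transh P X T Ti) j)" for i j k x m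
  proof -
    have ij: "i \<in> Iset n" "j \<in> Iset n" using that Om by auto
    have "T j m \<in> carrier (cmp P j)" using that B ij by (auto simp: transh_def transm_def)
    then have "bet P i j k x (T j m) \<in> carrier (cmp P i)" using H(2) that by blast
    then show ?thesis using that F B ij \<open>T j m \<in> _\<close> by (auto simp: transh_def transm_def)
  qed
qed



definition pbh :: "('f::field,'a) hmod \<Rightarrow> ('f,'b) hmod \<Rightarrow> (nat \<Rightarrow> ('a\<times>'b) set) \<Rightarrow> ('f,'a\<times>'b) hmod" where
 "pbh N M S = \<lparr>cmp = (\<lambda>i. subprod (cmp N i) (cmp M i) (S i)),
    bet = (\<lambda>i j k x p. (bet N i j k x (fst p), bet M i j k x (snd p)))\<rparr>"

lemma is_hmod_pbh:
  assumes N: "is_hmod n C cs Om N" and M: "is_hmod n C cs Om M" and Om: "Om \<subseteq> Iset n \<times> Iset n"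
    and S: "\<And>i. i \<in> Iset n \<Longrightarrow> S i \<subseteq> carrier (cmp N i) \<times> carrier (cmp M i)"
    and z: "\<And>i. i \<in> Iset n \<Longrightarrow> (\<zero>\<^bsub>cmp N i\<^esub>, \<zero>\<^bsub>cmp M i\<^esub>) \<in> S i"
    and ad: "\<And>i p q. i \<in> Iset n \<Longrightarrow> p \<in> S i \<Longrightarrow> q \<in> S i \<Longrightarrow>
              (fst p \<oplus>\<^bsub>cmp N i\<^esub> fst q, snd p \<oplus>\<^bsub>cmp M i\<^esub> snd q) \<in> S i"
    and sm: "\<And>i r p. i \<in> Iset n \<Longrightarrow> p \<in> S i \<Longrightarrow> (r \<odot>\<^bsub>cmp N i\<^esub> fst p, r \<odot>\<^bsub>cmp M i\<^esub> snd p) \<in> S i"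
    and bt: "\<And>i j k x p. (i,j)\<in>Om \<Longrightarrow> k < gg C i j \<Longrightarrow> x \<in> Rij n cs i j \<Longrightarrow> p \<in> S j \<Longrightarrow>
              (bet N i j k x (fst p), bet M i j k x (snd p)) \<in> S i"
  shows "is_hmod n C cs Om (pbh N M S)"
proof (rule is_hmodI)
  note HN = is_hmodD[OF N] and HM = is_hmodD[OF M]
  show "Module.module fps_ring (cmp (pbh N M S) i)" if i: "i \<in> Iset n" for i
    unfolding pbh_def using module_subprod[OF HN(1)[OF i] HM(1)[OF i] S[OF i] z[OF i]] ad[OF i] sm[OF i] by simp
  have SS: "fst p \<in> carrier (cmp N j) \<and> snd p \<in> carrier (cmp M j)" if "(i,j)\<in>Om" "p \<in> S j" for i j p
  proof -
    have "j \<in> Iset n" using Om that(1) by auto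
    then show ?thesis using S that(2) by fastforce
  qed
  show "bet (pbh N M S) i j k x m \<in> carrier (cmp (pbh N M S) i)"
    if "(i,j)\<in>Om" "k < gg C i j" "x \<in> Rij n cs i j" "m \<in> carrier (cmp (pbh N M S) j)" for i j k x m
    using bt[OF that(1-3)] that(4) by (simp add: pbh_def subprod_def)
  show "bet (pbh N M S) i j k (x + y) m = bet (pbh N M S) i j k x m \<oplus>\<^bsub>cmp (pbh N M S) i\<^esub> bet (pbh N M S) i j k y m"
    if "(i,j)\<in>Om" "k < gg C i j" "x \<in> Rij n cs i j" "y \<in> Rij n cs i j" "m \<in> carrier (cmp (pbh N M S) j)" for i j k x y m
  proof -
    have m: "m \<in> S j" using that(5) by (simp add: pbh_def subprod_def)
    note c = SS[OF that(1) m]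
    show ?thesis using HN(3)[OF that(1-4) conjunct1[OF c]] HM(3)[OF that(1-4) conjunct2[OF c]]
      by (simp add: pbh_def subprod_def)
  qed
  show "bet (pbh N M S) i j k x (m \<oplus>\<^bsub>cmp (pbh N M S) j\<^esub> m') = bet (pbh N M S) i j k x m \<oplus>\<^bsub>cmp (pbh N M S) i\<^esub> bet (pbh N M S) i j k x m'"
    if "(i,j)\<in>Om" "k < gg C i j" "x \<in> Rij n cs i j" "m \<in> carrier (cmp (pbh N M S) j)" "m' \<in> carrier (cmp (pbh N M S) j)" for i j k x m m'
  proof -
    have m: "m \<in> S j" "m' \<in> S j" using that(4,5) by (simp_all add: pbh_def subprod_def)
    note c = SS[OF that(1) m(1)] SS[OF that(1) m(2)]
    show ?thesis using HN(4)[OF that(1-3) conjunct1[OF c(1)] conjunct1[OF c(2)]]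
       HM(4)[OF that(1-3) conjunct2[OF c(1)] conjunct2[OF c(2)]]
      by (simp add: pbh_def subprod_def)
  qed
  show "bet (pbh N M S) i j k (emb n cs i r * x) m = r \<odot>\<^bsub>cmp (pbh N M S) i\<^esub> bet (pbh N M S) i j k x m"
    if "(i,j)\<in>Om" "k < gg C i j" "x \<in> Rij n cs i j" "m \<in> carrier (cmp (pbh N M S) j)" for i j k x m r
  proof -
    have m: "m \<in> S j" using that(4) by (simp add: pbh_def subprod_def)
    note c = SS[OF that(1) m]
    show ?thesis using HN(5)[OF that(1-3) conjunct1[OF c], of r] HM(5)[OF that(1-3) conjunct2[OF c], of r]
      by (simp add: pbh_def subprod_def)
  qed
  show "bet (pbh N M S) i j k (x * emb n cs j r) m = bet (pbh N M S) i j k x (r \<odot>\<^bsub>cmp (pbh N M S) j\<^esub> m)"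
    if "(i,j)\<in>Om" "k < gg C i j" "x \<in> Rij n cs i j" "m \<in> carrier (cmp (pbh N M S) j)" for i j k x m r
  proof -
    have m: "m \<in> S j" using that(4) by (simp add: pbh_def subprod_def)
    note c = SS[OF that(1) m]
    show ?thesis using HN(6)[OF that(1-3) conjunct1[OF c], of r] HM(6)[OF that(1-3) conjunct2[OF c], of r]
      by (simp add: pbh_def subprod_def)
  qed
qed

lemma is_hom_pbh_fst:
  assumes S: "\<And>i. i \<in> Iset n \<Longrightarrow> S i \<subseteq> carrier (cmp N i) \<times> carrier (cmp M i)"
  shows "is_hom n C cs Om (pbh N M S) N (\<lambda>i p. fst p)"
  apply (rule is_homI)
     apply (use S in \<open>force simp: pbh_def subprod_def\<close>)
    apply (simp_all add: pbh_def subprod_def)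
  done

lemma is_hom_pbh_snd:
  assumes S: "\<And>i. i \<in> Iset n \<Longrightarrow> S i \<subseteq> carrier (cmp N i) \<times> carrier (cmp M i)"
  shows "is_hom n C cs Om (pbh N M S) M (\<lambda>i p. snd p)"
  apply (rule is_homI)
     apply (use S in \<open>force simp: pbh_def subprod_def\<close>)
    apply (simp_all add: pbh_def subprod_def)
  done

lemma is_hom_into_pbh:
  assumes f: "is_hom n C cs Om Q N f" and g: "is_hom n C cs Om Q M g"
    and inS: "\<And>i q. i \<in> Iset n \<Longrightarrow> q \<in> carrier (cmp Q i) \<Longrightarrow> (f i q, g i q) \<in> S i"
  shows "is_hom n C cs Om Q (pbh N M S) (\<lambda>i q. (f i q, g i q))"
  apply (rule is_homI)
     apply (use is_homD[OF f] is_homD[OF g] inS in \<open>simp add: pbh_def subprod_def\<close>)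
    apply (use is_homD[OF f] is_homD[OF g] in \<open>simp add: pbh_def subprod_def\<close>)
   apply (use is_homD[OF f] is_homD[OF g] in \<open>simp add: pbh_def subprod_def\<close>)
  apply (use is_homD[OF f] is_homD[OF g] in \<open>simp add: pbh_def subprod_def\<close>)
  done


lemma cs_facts:
  assumes cs: "cartan_setup n C cs Om" and i: "i \<in> Iset n"
  shows "cs i > 0" "cs i dvd clcm n cs" "clcm n cs > 0"
proof -
  have "\<forall>i\<in>Iset n. cs i > 0" using cs unfolding cartan_setup_def by (elim conjE)
  then show p: "cs i > 0" using i by blast
  show "cs i dvd clcm n cs" unfolding clcm_def by (rule dvd_Lcm) (use i in auto)
  have "\<forall>i\<in>Iset n. cs i > 0" using cs unfolding cartan_setup_def by (elim conjE)
  then have "0 \<notin> cs ` Iset n" by auto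
  moreover have "finite (cs ` Iset n)" by (simp add: Iset_def)
  ultimately have "Lcm (cs ` Iset n) \<noteq> 0" using Lcm_0_iff by blast
  then show "clcm n cs > 0" unfolding clcm_def by simp
qed

lemma emb_X:
  assumes cs: "cartan_setup n C cs Om" and i: "i \<in> Iset n"
  shows "emb n cs i (fps_X ^ cs i) = (fps_X ^ clcm n cs :: 'f::field fps)"
proof -
  note F = cs_facts[OF cs i]
  define d where "d = clcm n cs div cs i"
  have dc: "d * cs i = clcm n cs" using F by (simp add: d_def)
  have d0: "d > 0" using F(3) dc by (cases d) auto
  have "fps_nth (fps_X ^ d :: 'f fps) 0 = 0" using d0 by simp
  then have "emb n cs i (fps_X ^ cs i) = ((fps_X ^ d) ^ cs i :: 'f fps)"
    unfolding emb_def d_def[symmetric] by (rule fps_X_power_compose)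
  also have "\<dots> = fps_X ^ clcm n cs" by (simp add: power_mult[symmetric] dc)
  finally show ?thesis .
qed

lemma eps_bet:
  assumes cs: "cartan_setup n C cs Om" and N: "is_hmod n C cs Om N"
    and ij: "(i,j) \<in> Om" and k: "k < gg C i j" and x: "x \<in> Rij n cs i j" and y: "y \<in> carrier (cmp N j)"
  shows "bet N i j k x (eps_act cs N j y) = eps_act cs N i (bet N i j k x y)"
proof -
  have "Om \<subseteq> Iset n \<times> Iset n" using cs unfolding cartan_setup_def by (elim conjE)
  then have ii: "i \<in> Iset n" "j \<in> Iset n" using ij by auto
  note H = is_hmodD[OF N]
  have "bet N i j k x (eps_act cs N j y) = bet N i j k (x * emb n cs j (fps_X ^ cs j)) y"
    unfolding eps_act_def using H(6)[OF ij k x y] by simp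
  also have "\<dots> = bet N i j k (emb n cs i (fps_X ^ cs i) * x) y"
    by (simp add: emb_X[OF cs ii(1)] emb_X[OF cs ii(2)] mult.commute)
  also have "\<dots> = eps_act cs N i (bet N i j k x y)"
    unfolding eps_act_def using H(5)[OF ij k x y] by simp
  finally show ?thesis .
qed

lemma free_inj:
  fixes Mi :: "('f::field fps, 'v) module"
  assumes fr: "free_module Mi" and Mm: "Module.module fps_ring Mi" and m: "m \<in> carrier Mi"
    and z: "(fps_X ^ k :: 'f fps) \<odot>\<^bsub>Mi\<^esub> m = \<zero>\<^bsub>Mi\<^esub>"
  shows "m = \<zero>\<^bsub>Mi\<^esub>"
proof -
  interpret Module.module fps_ring Mi by fact
  obtain B where B: "B \<subseteq> carrier Mi" and U: "\<forall>m\<in>carrier Mi. \<exists>!c.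
        finite {b\<in>B. c b \<noteq> 0} \<and> (\<forall>b. b \<notin> B \<longrightarrow> c b = 0) \<and>
        m = finsum Mi (\<lambda>b. smult Mi (c b) b) {b\<in>B. c b \<noteq> 0}"
    using fr unfolding free_module_def by blast
  obtain c where c: "finite {b\<in>B. c b \<noteq> 0}" "\<forall>b. b \<notin> B \<longrightarrow> c b = 0"
     "m = finsum Mi (\<lambda>b. smult Mi (c b) b) {b\<in>B. c b \<noteq> 0}"
    using U m by blast
  define c' where "c' b = fps_X ^ k * c b" for b
  have supp: "{b\<in>B. c' b \<noteq> 0} = {b\<in>B. c b \<noteq> 0}" by (simp add: c'_def)
  have "(fps_X ^ k :: 'f fps) \<odot>\<^bsub>Mi\<^esub> m = finsum Mi (\<lambda>b. (fps_X ^ k :: 'f fps) \<odot>\<^bsub>Mi\<^esub> (c b \<odot>\<^bsub>Mi\<^esub> b)) {b\<in>B. c b \<noteq> 0}"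
    unfolding c(3) by (rule finsum_smult_ldistr) (use c(1) B in \<open>auto\<close>)
  also have "\<dots> = finsum Mi (\<lambda>b. c' b \<odot>\<^bsub>Mi\<^esub> b) {b\<in>B. c' b \<noteq> 0}"
    unfolding supp
    by (rule finsum_cong') (use B in \<open>auto simp: c'_def smult_assoc1[symmetric] fps_ring_def\<close>)
  finally have r1: "\<zero>\<^bsub>Mi\<^esub> = finsum Mi (\<lambda>b. c' b \<odot>\<^bsub>Mi\<^esub> b) {b\<in>B. c' b \<noteq> 0}" using z by simp
  have r0: "\<zero>\<^bsub>Mi\<^esub> = finsum Mi (\<lambda>b. (\<lambda>_. 0::'f fps) b \<odot>\<^bsub>Mi\<^esub> b) {b\<in>B. (\<lambda>_. 0::'f fps) b \<noteq> 0}" by simp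
  define P where "P = (\<lambda>c. finite {b\<in>B. c b \<noteq> 0} \<and> (\<forall>b. b \<notin> B \<longrightarrow> c b = 0) \<and>
        \<zero>\<^bsub>Mi\<^esub> = finsum Mi (\<lambda>b. smult Mi (c b) b) {b\<in>B. c b \<noteq> 0})"
  have ex: "\<exists>!c. P c" unfolding P_def using U zero_closed by blast
  have p1: "P c'" unfolding P_def using r1 c(1,2) supp by (simp add: c'_def)
  have p0: "P (\<lambda>_. 0)" unfolding P_def using r0 by simp
  have "c' = (\<lambda>_. 0)" using ex p1 p0 by blast
  then have "\<forall>b. c b = 0" by (metis c'_def mult_eq_0_iff power_not_zero fps_X_neq_zero)
  then show ?thesis using c(3) by simp
qed

context
  fixes cs :: "nat \<Rightarrow> nat" and P :: "('f::field, 'v) hmod" and i :: nat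
  assumes Pm: "Module.module fps_ring (cmp P i)"
begin

interpretation PM: Module.module fps_ring "cmp P i" by (rule Pm)

lemma eps_closed: "x \<in> carrier (cmp P i) \<Longrightarrow> eps_act cs P i x \<in> carrier (cmp P i)"
  by (simp add: eps_act_def)

lemma eps_add: "x \<in> carrier (cmp P i) \<Longrightarrow> y \<in> carrier (cmp P i) \<Longrightarrow>
   eps_act cs P i (x \<oplus>\<^bsub>cmp P i\<^esub> y) = eps_act cs P i x \<oplus>\<^bsub>cmp P i\<^esub> eps_act cs P i y"
  by (simp add: eps_act_def PM.smult_r_distr)

lemma eps_smult: "x \<in> carrier (cmp P i) \<Longrightarrow>
   eps_act cs P i (r \<odot>\<^bsub>cmp P i\<^esub> x) = r \<odot>\<^bsub>cmp P i\<^esub> eps_act cs P i x"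
proof -
  assume x: "x \<in> carrier (cmp P i)"
  have "eps_act cs P i (r \<odot>\<^bsub>cmp P i\<^esub> x) = (fps_X ^ cs i \<otimes>\<^bsub>fps_ring\<^esub> r) \<odot>\<^bsub>cmp P i\<^esub> x"
    unfolding eps_act_def using x by (simp add: PM.smult_assoc1)
  also have "\<dots> = (r \<otimes>\<^bsub>fps_ring\<^esub> fps_X ^ cs i) \<odot>\<^bsub>cmp P i\<^esub> x"
    by (simp add: fps_ring_def mult.commute)
  also have "\<dots> = r \<odot>\<^bsub>cmp P i\<^esub> eps_act cs P i x"
    unfolding eps_act_def using x by (simp add: PM.smult_assoc1)
  finally show ?thesis .
qed

lemma eps_zero: "eps_act cs P i \<zero>\<^bsub>cmp P i\<^esub> = \<zero>\<^bsub>cmp P i\<^esub>"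
  by (simp add: eps_act_def)

lemma eps_neg: "x \<in> carrier (cmp P i) \<Longrightarrow> eps_act cs P i (\<ominus>\<^bsub>cmp P i\<^esub> x) = \<ominus>\<^bsub>cmp P i\<^esub> eps_act cs P i x"
  by (simp add: eps_act_def PM.smult_r_minus)

lemma ecoset_mem: "a \<in> carrier (cmp P i) \<Longrightarrow> a \<in> ecoset cs P i a"
  unfolding ecoset_def
  by (rule CollectI, rule exI[of _ "\<zero>\<^bsub>cmp P i\<^esub>"]) (simp add: eps_zero)

lemma ecoset_sub: "a \<in> carrier (cmp P i) \<Longrightarrow> ecoset cs P i a \<subseteq> carrier (cmp P i)"
  unfolding ecoset_def using eps_closed by auto

lemma ecoset_eq_iff:
  assumes a: "a \<in> carrier (cmp P i)" and b: "b \<in> carrier (cmp P i)"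
  shows "ecoset cs P i a = ecoset cs P i b \<longleftrightarrow> (\<exists>x\<in>carrier (cmp P i). b = a \<oplus>\<^bsub>cmp P i\<^esub> eps_act cs P i x)"
proof
  assume "ecoset cs P i a = ecoset cs P i b"
  then have "b \<in> ecoset cs P i a" using ecoset_mem[OF b] by simp
  then show "\<exists>x\<in>carrier (cmp P i). b = a \<oplus>\<^bsub>cmp P i\<^esub> eps_act cs P i x"
    unfolding ecoset_def by auto
next
  assume "\<exists>x\<in>carrier (cmp P i). b = a \<oplus>\<^bsub>cmp P i\<^esub> eps_act cs P i x"
  then obtain x where x: "x \<in> carrier (cmp P i)" and bx: "b = a \<oplus>\<^bsub>cmp P i\<^esub> eps_act cs P i x" by blast
  have ex: "eps_act cs P i x \<in> carrier (cmp P i)" using eps_closed[OF x] .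
  show "ecoset cs P i a = ecoset cs P i b"
  proof (intro equalityI subsetI)
      fix y
      assume "y \<in> ecoset cs P i a"
      then obtain z where z: "z \<in> carrier (cmp P i)" and yz: "y = a \<oplus>\<^bsub>cmp P i\<^esub> eps_act cs P i z"
        unfolding ecoset_def by auto
      have ez: "eps_act cs P i z \<in> carrier (cmp P i)" using eps_closed[OF z] .
      have "y = b \<oplus>\<^bsub>cmp P i\<^esub> eps_act cs P i (z \<oplus>\<^bsub>cmp P i\<^esub> \<ominus>\<^bsub>cmp P i\<^esub> x)"
      proof -
        have eq: "eps_act cs P i x \<oplus>\<^bsub>cmp P i\<^esub> (eps_act cs P i z \<oplus>\<^bsub>cmp P i\<^esub> \<ominus>\<^bsub>cmp P i\<^esub> eps_act cs P i x) = eps_act cs P i z"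
          using ex ez by (metis PM.a_comm PM.r_neg2 PM.a_inv_closed)
        have "b \<oplus>\<^bsub>cmp P i\<^esub> eps_act cs P i (z \<oplus>\<^bsub>cmp P i\<^esub> \<ominus>\<^bsub>cmp P i\<^esub> x) =
           a \<oplus>\<^bsub>cmp P i\<^esub> (eps_act cs P i x \<oplus>\<^bsub>cmp P i\<^esub> (eps_act cs P i z \<oplus>\<^bsub>cmp P i\<^esub> \<ominus>\<^bsub>cmp P i\<^esub> eps_act cs P i x))"
          using x z ex ez a unfolding bx by (simp add: eps_add eps_neg PM.a_assoc)
        then show ?thesis using eq yz by simp
      qed
      then show "y \<in> ecoset cs P i b" unfolding ecoset_def using x z by auto
    next
      fix y
      assume "y \<in> ecoset cs P i b"
      then obtain z where z: "z \<in> carrier (cmp P i)" and yz: "y = b \<oplus>\<^bsub>cmp P i\<^esub> eps_act cs P i z"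
        unfolding ecoset_def by auto
      have ez: "eps_act cs P i z \<in> carrier (cmp P i)" using eps_closed[OF z] .
      have "y = a \<oplus>\<^bsub>cmp P i\<^esub> eps_act cs P i (x \<oplus>\<^bsub>cmp P i\<^esub> z)"
        using x z ex ez a unfolding yz bx
        by (simp add: eps_add PM.a_ac)
      then show "y \<in> ecoset cs P i a" unfolding ecoset_def using x z by auto
  qed
qed

lemma rep_ecoset:
  assumes a: "a \<in> carrier (cmp P i)"
  shows "rep (ecoset cs P i a) \<in> carrier (cmp P i)" "ecoset cs P i (rep (ecoset cs P i a)) = ecoset cs P i a"
proof -
  have "rep (ecoset cs P i a) \<in> ecoset cs P i a"
    unfolding rep_def using ecoset_mem[OF a] by (rule someI)
  then obtain x where x: "x \<in> carrier (cmp P i)" and r: "rep (ecoset cs P i a) = a \<oplus>\<^bsub>cmp P i\<^esub> eps_act cs P i x"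
    unfolding ecoset_def by auto
  show c: "rep (ecoset cs P i a) \<in> carrier (cmp P i)" using r x a eps_closed by simp
  show "ecoset cs P i (rep (ecoset cs P i a)) = ecoset cs P i a"
    using ecoset_eq_iff[OF a c] x r by auto
qed

lemma cong_add:
  assumes "a \<in> carrier (cmp P i)" "a' \<in> carrier (cmp P i)" "b \<in> carrier (cmp P i)" "b' \<in> carrier (cmp P i)"
    "ecoset cs P i a = ecoset cs P i a'" "ecoset cs P i b = ecoset cs P i b'"
  shows "ecoset cs P i (a \<oplus>\<^bsub>cmp P i\<^esub> b) = ecoset cs P i (a' \<oplus>\<^bsub>cmp P i\<^esub> b')"
proof -
  obtain x where x: "x \<in> carrier (cmp P i)" "a' = a \<oplus>\<^bsub>cmp P i\<^esub> eps_act cs P i x"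
    using ecoset_eq_iff assms by blast
  obtain y where y: "y \<in> carrier (cmp P i)" "b' = b \<oplus>\<^bsub>cmp P i\<^esub> eps_act cs P i y"
    using ecoset_eq_iff assms by blast
  have "a' \<oplus>\<^bsub>cmp P i\<^esub> b' = (a \<oplus>\<^bsub>cmp P i\<^esub> b) \<oplus>\<^bsub>cmp P i\<^esub> eps_act cs P i (x \<oplus>\<^bsub>cmp P i\<^esub> y)"
    using x y assms eps_closed by (simp add: eps_add PM.a_ac)
  moreover have "a \<oplus>\<^bsub>cmp P i\<^esub> b \<in> carrier (cmp P i)" "a' \<oplus>\<^bsub>cmp P i\<^esub> b' \<in> carrier (cmp P i)" using assms by simp_all
  ultimately show ?thesis using ecoset_eq_iff x(1) y(1) by blast
qed

lemma cong_smult: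
  assumes "a \<in> carrier (cmp P i)" "a' \<in> carrier (cmp P i)" "ecoset cs P i a = ecoset cs P i a'"
  shows "ecoset cs P i (r \<odot>\<^bsub>cmp P i\<^esub> a) = ecoset cs P i (r \<odot>\<^bsub>cmp P i\<^esub> a')"
proof -
  obtain x where x: "x \<in> carrier (cmp P i)" "a' = a \<oplus>\<^bsub>cmp P i\<^esub> eps_act cs P i x"
    using ecoset_eq_iff assms by blast
  have "r \<odot>\<^bsub>cmp P i\<^esub> a' = (r \<odot>\<^bsub>cmp P i\<^esub> a) \<oplus>\<^bsub>cmp P i\<^esub> eps_act cs P i (r \<odot>\<^bsub>cmp P i\<^esub> x)"
    using x assms eps_closed by (simp add: eps_smult PM.smult_r_distr)
  moreover have "r \<odot>\<^bsub>cmp P i\<^esub> a \<in> carrier (cmp P i)" "r \<odot>\<^bsub>cmp P i\<^esub> a' \<in> carrier (cmp P i)" "r \<odot>\<^bsub>cmp P i\<^esub> x \<in> carrier (cmp P i)" using assms x by simp_all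
  ultimately show ?thesis using ecoset_eq_iff by blast
qed

lemma red_add:
  assumes "a \<in> carrier (cmp P i)" "b \<in> carrier (cmp P i)"
  shows "add (cmp (Red cs P) i) (ecoset cs P i a) (ecoset cs P i b) = ecoset cs P i (a \<oplus>\<^bsub>cmp P i\<^esub> b)"
  unfolding Red_def using cong_add[OF rep_ecoset(1)[OF assms(1)] assms(1) rep_ecoset(1)[OF assms(2)] assms(2)
     rep_ecoset(2)[OF assms(1)] rep_ecoset(2)[OF assms(2)]] by simp

lemma red_smult:
  assumes "a \<in> carrier (cmp P i)"
  shows "smult (cmp (Red cs P) i) r (ecoset cs P i a) = ecoset cs P i (r \<odot>\<^bsub>cmp P i\<^esub> a)"
  unfolding Red_def using cong_smult[OF rep_ecoset(1)[OF assms(1)] assms(1) rep_ecoset(2)[OF assms(1)]] by simp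

lemma red_carrier: "carrier (cmp (Red cs P) i) = ecoset cs P i ` carrier (cmp P i)"
  by (simp add: Red_def)

lemma red_zero: "zero (cmp (Red cs P) i) = ecoset cs P i \<zero>\<^bsub>cmp P i\<^esub>"
  by (simp add: Red_def)

end

lemma cartan_Om: "cartan_setup n C cs Om \<Longrightarrow> Om \<subseteq> Iset n \<times> Iset n"
  unfolding cartan_setup_def by (elim conjE)

lemma cong_bet:
  assumes cs: "cartan_setup n C cs Om" and P: "is_hmod n C cs Om P"
    and ij: "(i,j) \<in> Om" and k: "k < gg C i j" and x: "x \<in> Rij n cs i j"
    and a: "a \<in> carrier (cmp P j)" and a': "a' \<in> carrier (cmp P j)"
    and e: "ecoset cs P j a = ecoset cs P j a'"
  shows "ecoset cs P i (bet P i j k x a) = ecoset cs P i (bet P i j k x a')"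
proof -
  have ii: "i \<in> Iset n" "j \<in> Iset n" using cartan_Om[OF cs] ij by auto
  note H = is_hmodD[OF P]
  have Mj: "Module.module fps_ring (cmp P j)" and Mi: "Module.module fps_ring (cmp P i)"
    using H(1) ii by auto
  obtain y where y: "y \<in> carrier (cmp P j)" "a' = a \<oplus>\<^bsub>cmp P j\<^esub> eps_act cs P j y"
    using ecoset_eq_iff[OF Mj a a'] e by blast
  have ey: "eps_act cs P j y \<in> carrier (cmp P j)" using eps_closed[OF Mj y(1)] .
  have "bet P i j k x a' = bet P i j k x a \<oplus>\<^bsub>cmp P i\<^esub> eps_act cs P i (bet P i j k x y)"
    using H(4)[OF ij k x a ey] eps_bet[OF cs P ij k x y(1)] y(2) by simp
  moreover have "bet P i j k x a \<in> carrier (cmp P i)" "bet P i j k x a' \<in> carrier (cmp P i)"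
     "bet P i j k x y \<in> carrier (cmp P i)"
    using H(2)[OF ij k x] a a' y(1) by auto
  ultimately show ?thesis using ecoset_eq_iff[OF Mi] by blast
qed

lemma red_bet:
  assumes cs: "cartan_setup n C cs Om" and P: "is_hmod n C cs Om P"
    and ij: "(i,j) \<in> Om" and k: "k < gg C i j" and x: "x \<in> Rij n cs i j"
    and a: "a \<in> carrier (cmp P j)"
  shows "bet (Red cs P) i j k x (ecoset cs P j a) = ecoset cs P i (bet P i j k x a)"
proof -
  have ii: "j \<in> Iset n" using cartan_Om[OF cs] ij by auto
  have Mj: "Module.module fps_ring (cmp P j)" using is_hmodD(1)[OF P ii] .
  show ?thesis unfolding Red_def
    using cong_bet[OF cs P ij k x rep_ecoset(1)[OF Mj a] a rep_ecoset(2)[OF Mj a]] by simp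
qed

lemma eps_inj:
  assumes Mm: "Module.module fps_ring (cmp P i)" and fr: "free_module (cmp P i)"
    and x: "x \<in> carrier (cmp P i)" and y: "y \<in> carrier (cmp P i)"
    and e: "eps_act cs P i x = eps_act cs P i y"
  shows "x = y"
proof -
  interpret PM: Module.module fps_ring "cmp P i" by fact
  have "eps_act cs P i (x \<oplus>\<^bsub>cmp P i\<^esub> \<ominus>\<^bsub>cmp P i\<^esub> y) = \<zero>\<^bsub>cmp P i\<^esub>"
    using x y e eps_add[OF Mm] eps_neg[OF Mm] eps_closed[OF Mm] by (simp add: PM.r_neg)
  then have "x \<oplus>\<^bsub>cmp P i\<^esub> \<ominus>\<^bsub>cmp P i\<^esub> y = \<zero>\<^bsub>cmp P i\<^esub>"
    using free_inj[OF fr Mm] x y unfolding eps_act_def by simp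
  then show ?thesis using x y by (metis PM.add.inv_closed PM.l_neg PM.a_assoc PM.r_zero PM.l_zero PM.a_comm)
qed

definition dv :: "(nat \<Rightarrow> nat) \<Rightarrow> ('f::field,'v) hmod \<Rightarrow> nat \<Rightarrow> 'v \<Rightarrow> 'v" where
  "dv cs P i y = (THE x. x \<in> carrier (cmp P i) \<and> eps_act cs P i x = y)"

lemma dv_eps:
  assumes Mm: "Module.module fps_ring (cmp P i)" and fr: "free_module (cmp P i)"
    and x: "x \<in> carrier (cmp P i)"
  shows "dv cs P i (eps_act cs P i x) = x"
  unfolding dv_def
  by (rule the_equality) (use x eps_inj[OF Mm fr] in auto)

lemma bet_zero:
  assumes P: "is_hmod n C cs Om P" and cs: "cartan_setup n C cs Om"
    and ij: "(i,j) \<in> Om" and k: "k < gg C i j" and x: "x \<in> Rij n cs i j"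
  shows "bet P i j k x \<zero>\<^bsub>cmp P j\<^esub> = \<zero>\<^bsub>cmp P i\<^esub>"
proof -
  have ii: "i \<in> Iset n" "j \<in> Iset n" using cartan_Om[OF cs] ij by auto
  note H = is_hmodD[OF P]
  interpret Pj: Module.module fps_ring "cmp P j" using H(1) ii by auto
  interpret Pi: Module.module fps_ring "cmp P i" using H(1) ii by auto
  have w: "bet P i j k x \<zero>\<^bsub>cmp P j\<^esub> \<in> carrier (cmp P i)" using H(2)[OF ij k x] by simp
  have "bet P i j k x \<zero>\<^bsub>cmp P j\<^esub> = bet P i j k x \<zero>\<^bsub>cmp P j\<^esub> \<oplus>\<^bsub>cmp P i\<^esub> bet P i j k x \<zero>\<^bsub>cmp P j\<^esub>"
    using H(4)[OF ij k x, of "\<zero>\<^bsub>cmp P j\<^esub>" "\<zero>\<^bsub>cmp P j\<^esub>"] by simp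
  then show ?thesis using w by (metis Pi.add.r_cancel_one' Pi.r_zero Pi.zero_closed)
qed

lemma eps_hom:
  assumes cs: "cartan_setup n C cs Om" and N: "is_hmod n C cs Om N"
  shows "is_hom n C cs Om N N (\<lambda>i x. eps_act cs N i x)"
proof (rule is_homI)
  note H = is_hmodD[OF N]
  show "eps_act cs N i m \<in> carrier (cmp N i)" if "i \<in> Iset n" "m \<in> carrier (cmp N i)" for i m
    using eps_closed[OF H(1)] that by blast
  show "eps_act cs N i (m \<oplus>\<^bsub>cmp N i\<^esub> m') = eps_act cs N i m \<oplus>\<^bsub>cmp N i\<^esub> eps_act cs N i m'"
    if "i \<in> Iset n" "m \<in> carrier (cmp N i)" "m' \<in> carrier (cmp N i)" for i m m'
    using eps_add[OF H(1)] that by blast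
  show "eps_act cs N i (r \<odot>\<^bsub>cmp N i\<^esub> m) = r \<odot>\<^bsub>cmp N i\<^esub> eps_act cs N i m"
    if "i \<in> Iset n" "m \<in> carrier (cmp N i)" for i m r
    using eps_smult[OF H(1)] that by blast
  show "eps_act cs N i (bet N i j k x m) = bet N i j k x (eps_act cs N j m)"
    if "(i,j)\<in>Om" "k < gg C i j" "x \<in> Rij n cs i j" "m \<in> carrier (cmp N j)" for i j k x m
    using eps_bet[OF cs N that] by simp
qed

lemma zero_hom:
  assumes cs: "cartan_setup n C cs Om" and N: "is_hmod n C cs Om N" and M: "is_hmod n C cs Om M"
  shows "is_hom n C cs Om N M (\<lambda>i x. \<zero>\<^bsub>cmp M i\<^esub>)"
proof (rule is_homI)
  note H = is_hmodD[OF M]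
  show "\<zero>\<^bsub>cmp M i\<^esub> \<in> carrier (cmp M i)" if "i \<in> Iset n" for i
  proof -
    interpret Module.module fps_ring "cmp M i" using H(1) that by auto
    show ?thesis by simp
  qed
  show "\<zero>\<^bsub>cmp M i\<^esub> = \<zero>\<^bsub>cmp M i\<^esub> \<oplus>\<^bsub>cmp M i\<^esub> \<zero>\<^bsub>cmp M i\<^esub>" if "i \<in> Iset n" for i
  proof -
    interpret Module.module fps_ring "cmp M i" using H(1) that by auto
    show ?thesis by simp
  qed
  show "\<zero>\<^bsub>cmp M i\<^esub> = r \<odot>\<^bsub>cmp M i\<^esub> \<zero>\<^bsub>cmp M i\<^esub>" if "i \<in> Iset n" for i r
  proof -
    interpret Module.module fps_ring "cmp M i" using H(1) that by auto
    show ?thesis by simp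
  qed
  show "\<zero>\<^bsub>cmp M i\<^esub> = bet M i j k x \<zero>\<^bsub>cmp M j\<^esub>"
    if "(i,j)\<in>Om" "k < gg C i j" "x \<in> Rij n cs i j" for i j k x
    using bet_zero[OF M cs that] by simp
qed

lemma inj_part:
  assumes cs: "cartan_setup n C cs Om" and HM: "is_hmod n C cs Om M" and HN: "is_hmod n C cs Om N"
    and FN: "locally_free n N" and f: "is_hom n C cs Om M N f"
    and z: "\<forall>i\<in>Iset n. \<forall>A\<in>carrier (cmp (Red cs M) i). red_hom cs N f i A = zero (cmp (Red cs N) i)"
  shows "\<exists>g. is_hom n C cs Om M N g \<and> (\<forall>i\<in>Iset n. \<forall>m\<in>carrier (cmp M i). f i m = eps_act cs N i (g i m))"
proof -
  note F = is_homD[OF f]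
  have Mm: "\<And>i. i \<in> Iset n \<Longrightarrow> Module.module fps_ring (cmp M i)" using is_hmodD(1)[OF HM] .
  have Nm: "\<And>i. i \<in> Iset n \<Longrightarrow> Module.module fps_ring (cmp N i)" using is_hmodD(1)[OF HN] .
  have Nf: "\<And>i. i \<in> Iset n \<Longrightarrow> free_module (cmp N i)" using FN by (simp add: locally_free_def)
  have fe: "\<exists>y\<in>carrier (cmp N i). f i m = eps_act cs N i y" if i: "i \<in> Iset n" and m: "m \<in> carrier (cmp M i)" for i m
  proof -
    interpret MM: Module.module fps_ring "cmp M i" using Mm[OF i] .
    interpret NN: Module.module fps_ring "cmp N i" using Nm[OF i] .
    define A where "A = ecoset cs M i m"
    have A: "A \<in> carrier (cmp (Red cs M) i)" unfolding A_def red_carrier[OF Mm[OF i]] using m by blast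
    have rA: "rep A \<in> carrier (cmp M i)" "ecoset cs M i (rep A) = ecoset cs M i m"
      using rep_ecoset[OF Mm[OF i] m] unfolding A_def by auto
    obtain w where w: "w \<in> carrier (cmp M i)" "rep A = m \<oplus>\<^bsub>cmp M i\<^esub> eps_act cs M i w"
      using ecoset_eq_iff[OF Mm[OF i] m rA(1)] rA(2) by metis
    have "f i (rep A) = f i m \<oplus>\<^bsub>cmp N i\<^esub> eps_act cs N i (f i w)"
      using w m F(2)[OF i] F(3)[OF i] eps_closed[OF Mm[OF i]] unfolding eps_act_def by simp
    then have e1: "ecoset cs N i (f i m) = ecoset cs N i (f i (rep A))"
      using ecoset_eq_iff[OF Nm[OF i]] F(1)[OF i] m rA(1) w(1) by blast
    have "ecoset cs N i (f i (rep A)) = ecoset cs N i \<zero>\<^bsub>cmp N i\<^esub>"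
      using z i A red_zero[OF Nm[OF i]] unfolding red_hom_def by simp
    then have "ecoset cs N i \<zero>\<^bsub>cmp N i\<^esub> = ecoset cs N i (f i m)" using e1 by simp
    then obtain y where "y \<in> carrier (cmp N i)" "f i m = \<zero>\<^bsub>cmp N i\<^esub> \<oplus>\<^bsub>cmp N i\<^esub> eps_act cs N i y"
      using ecoset_eq_iff[OF Nm[OF i] NN.zero_closed] F(1)[OF i m] by blast
    then show ?thesis using eps_closed[OF Nm[OF i]] by auto
  qed
  define g where "g i m = dv cs N i (f i m)" for i m
  have g: "g i m \<in> carrier (cmp N i) \<and> eps_act cs N i (g i m) = f i m" if i: "i \<in> Iset n" and m: "m \<in> carrier (cmp M i)" for i m
  proof -
    obtain y where "y\<in>carrier (cmp N i)" "f i m = eps_act cs N i y" using fe[OF i m] by blast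
    then show ?thesis unfolding g_def using dv_eps[OF Nm[OF i] Nf[OF i]] by simp
  qed
  have hom: "is_hom n C cs Om M N g"
  proof (rule is_homI)
    show "g i m \<in> carrier (cmp N i)" if "i \<in> Iset n" "m \<in> carrier (cmp M i)" for i m using g[OF that] by blast
    show "g i (m \<oplus>\<^bsub>cmp M i\<^esub> m') = g i m \<oplus>\<^bsub>cmp N i\<^esub> g i m'"
      if i: "i \<in> Iset n" and m: "m \<in> carrier (cmp M i)" "m' \<in> carrier (cmp M i)" for i m m'
    proof -
      interpret MM: Module.module fps_ring "cmp M i" using Mm[OF i] .
      interpret NN: Module.module fps_ring "cmp N i" using Nm[OF i] .
      have s: "m \<oplus>\<^bsub>cmp M i\<^esub> m' \<in> carrier (cmp M i)" using m by simp
      show ?thesis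
        by (rule eps_inj[where cs=cs, OF Nm[OF i] Nf[OF i]]) (use g[OF i s] g[OF i m(1)] g[OF i m(2)] F(2)[OF i m] eps_add[OF Nm[OF i]] in auto)
    qed
    show "g i (r \<odot>\<^bsub>cmp M i\<^esub> m) = r \<odot>\<^bsub>cmp N i\<^esub> g i m"
      if i: "i \<in> Iset n" and m: "m \<in> carrier (cmp M i)" for i m r
    proof -
      interpret MM: Module.module fps_ring "cmp M i" using Mm[OF i] .
      interpret NN: Module.module fps_ring "cmp N i" using Nm[OF i] .
      have s: "r \<odot>\<^bsub>cmp M i\<^esub> m \<in> carrier (cmp M i)" using m by simp
      show ?thesis
        by (rule eps_inj[where cs=cs, OF Nm[OF i] Nf[OF i]]) (use g[OF i s] g[OF i m] F(3)[OF i m] eps_smult[OF Nm[OF i]] in auto)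
    qed
    show "g i (bet M i j k x m) = bet N i j k x (g j m)"
      if ij: "(i,j)\<in>Om" and k: "k < gg C i j" and x: "x \<in> Rij n cs i j" and m: "m \<in> carrier (cmp M j)" for i j k x m
    proof -
      have ii: "i \<in> Iset n" "j \<in> Iset n" using cartan_Om[OF cs] ij by auto
      have b: "bet M i j k x m \<in> carrier (cmp M i)" using is_hmodD(2)[OF HM ij k x m] .
      have gj: "g j m \<in> carrier (cmp N j)" "eps_act cs N j (g j m) = f j m" using g[OF ii(2) m] by auto
      have b2: "bet N i j k x (g j m) \<in> carrier (cmp N i)" using is_hmodD(2)[OF HN ij k x gj(1)] .
      show ?thesis
      proof (rule eps_inj[OF Nm[OF ii(1)] Nf[OF ii(1)]])
        show "g i (bet M i j k x m) \<in> carrier (cmp N i)" using g[OF ii(1) b] by blast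
        show "bet N i j k x (g j m) \<in> carrier (cmp N i)" by (rule b2)
        have "eps_act cs N i (g i (bet M i j k x m)) = f i (bet M i j k x m)" using g[OF ii(1) b] by blast
        also have "\<dots> = bet N i j k x (f j m)" using F(4)[OF ij k x m] .
        also have "\<dots> = eps_act cs N i (bet N i j k x (g j m))"
          using eps_bet[OF cs HN ij k x gj(1)] gj(2) by simp
        finally show "eps_act cs N i (g i (bet M i j k x m)) = eps_act cs N i (bet N i j k x (g j m))" .
      qed
    qed
  qed
  show ?thesis using hom g by metis
qed

lemma surj_part:
  fixes M :: "('f::field, 'm) hmod" and N :: "('f, 'n) hmod"
  assumes cs: "cartan_setup n C cs Om" and HM: "is_hmod n C cs Om M" and HN: "is_hmod n C cs Om N"
    and FN: "locally_free n N" and ext: "ext1_zero n C cs Om M N"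
    and phi: "is_hom n C cs Om (Red cs M) (Red cs N) \<phi>"
  shows "\<exists>f. is_hom n C cs Om M N f \<and>
              (\<forall>i\<in>Iset n. \<forall>A\<in>carrier (cmp (Red cs M) i). \<phi> i A = red_hom cs N f i A)"
proof -
  have Om: "Om \<subseteq> Iset n \<times> Iset n" using cartan_Om[OF cs] .
  note Ph = is_homD[OF phi]
  have Mm: "\<And>i. i \<in> Iset n \<Longrightarrow> Module.module fps_ring (cmp M i)" using is_hmodD(1)[OF HM] .
  have Nm: "\<And>i. i \<in> Iset n \<Longrightarrow> Module.module fps_ring (cmp N i)" using is_hmodD(1)[OF HN] .
  have Nf: "\<And>i. i \<in> Iset n \<Longrightarrow> free_module (cmp N i)" using FN by (simp add: locally_free_def)
  have z0: "(0::'f fps) = \<zero>\<^bsub>fps_ring\<^esub>" by (simp add: fps_ring_def)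
  have ecM: "ecoset cs M i b \<in> carrier (cmp (Red cs M) i)" if i: "i \<in> Iset n" and b: "b \<in> carrier (cmp M i)" for i b
    using red_carrier[OF Mm[OF i]] b by blast
  have phiC: "\<exists>a\<in>carrier (cmp N i). \<phi> i (ecoset cs M i b) = ecoset cs N i a"
    if i: "i \<in> Iset n" and b: "b \<in> carrier (cmp M i)" for i b
    using Ph(1)[OF i ecM[OF i b]] red_carrier[OF Nm[OF i]] by blast
  have phi0: "\<phi> i (ecoset cs M i \<zero>\<^bsub>cmp M i\<^esub>) = ecoset cs N i \<zero>\<^bsub>cmp N i\<^esub>" if i: "i \<in> Iset n" for i
  proof -
    interpret MM: Module.module fps_ring "cmp M i" using Mm[OF i] .
    interpret NN: Module.module fps_ring "cmp N i" using Nm[OF i] .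
    obtain a where a: "a \<in> carrier (cmp N i)" "\<phi> i (ecoset cs M i \<zero>\<^bsub>cmp M i\<^esub>) = ecoset cs N i a"
      using phiC[OF i MM.zero_closed] by blast
    have "smult (cmp (Red cs M) i) 0 (ecoset cs M i \<zero>\<^bsub>cmp M i\<^esub>) = ecoset cs M i \<zero>\<^bsub>cmp M i\<^esub>"
      using red_smult[OF Mm[OF i] MM.zero_closed] by simp
    then have "\<phi> i (ecoset cs M i \<zero>\<^bsub>cmp M i\<^esub>) = smult (cmp (Red cs N) i) 0 (\<phi> i (ecoset cs M i \<zero>\<^bsub>cmp M i\<^esub>))"
      using Ph(3)[OF i ecM[OF i MM.zero_closed], of 0] by simp
    also have "\<dots> = ecoset cs N i ((0::'f fps) \<odot>\<^bsub>cmp N i\<^esub> a)"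
      using a red_smult[OF Nm[OF i] a(1)] by simp
    also have "\<dots> = ecoset cs N i \<zero>\<^bsub>cmp N i\<^esub>" using a(1) NN.smult_l_null unfolding z0 by simp
    finally show ?thesis .
  qed
  define \<psi> where "\<psi> i b = (if b = \<zero>\<^bsub>cmp M i\<^esub> then \<zero>\<^bsub>cmp N i\<^esub> else rep (\<phi> i (ecoset cs M i b)))" for i b
  have Q0: "\<psi> i b \<in> carrier (cmp N i) \<and> ecoset cs N i (\<psi> i b) = \<phi> i (ecoset cs M i b)"
    if i: "i \<in> Iset n" and b: "b \<in> carrier (cmp M i)" for i b
  proof (cases "b = \<zero>\<^bsub>cmp M i\<^esub>")
    case True
    interpret NN: Module.module fps_ring "cmp N i" using Nm[OF i] .
    show ?thesis using True phi0[OF i] by (simp add: \<psi>_def)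
  next
    case False
    obtain a where a: "a \<in> carrier (cmp N i)" "\<phi> i (ecoset cs M i b) = ecoset cs N i a"
      using phiC[OF i b] by blast
    show ?thesis using False a rep_ecoset[OF Nm[OF i] a(1)] by (simp add: \<psi>_def)
  qed
  have Q1: "ecoset cs N i (\<psi> i (b \<oplus>\<^bsub>cmp M i\<^esub> b')) = ecoset cs N i (\<psi> i b \<oplus>\<^bsub>cmp N i\<^esub> \<psi> i b')"
    if i: "i \<in> Iset n" and b: "b \<in> carrier (cmp M i)" and b': "b' \<in> carrier (cmp M i)" for i b b'
  proof -
    interpret MM: Module.module fps_ring "cmp M i" using Mm[OF i] .
    have s: "b \<oplus>\<^bsub>cmp M i\<^esub> b' \<in> carrier (cmp M i)" using b b' by simp
    have "ecoset cs N i (\<psi> i (b \<oplus>\<^bsub>cmp M i\<^esub> b')) = \<phi> i (ecoset cs M i (b \<oplus>\<^bsub>cmp M i\<^esub> b'))"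
      using Q0[OF i s] by simp
    also have "\<dots> = \<phi> i (add (cmp (Red cs M) i) (ecoset cs M i b) (ecoset cs M i b'))"
      using red_add[OF Mm[OF i] b b'] by simp
    also have "\<dots> = add (cmp (Red cs N) i) (\<phi> i (ecoset cs M i b)) (\<phi> i (ecoset cs M i b'))"
      using Ph(2)[OF i ecM[OF i b] ecM[OF i b']] .
    also have "\<dots> = add (cmp (Red cs N) i) (ecoset cs N i (\<psi> i b)) (ecoset cs N i (\<psi> i b'))"
      using Q0[OF i b] Q0[OF i b'] by simp
    also have "\<dots> = ecoset cs N i (\<psi> i b \<oplus>\<^bsub>cmp N i\<^esub> \<psi> i b')"
      using red_add[OF Nm[OF i], of "\<psi> i b" "\<psi> i b'" cs] conjunct1[OF Q0[OF i b]] conjunct1[OF Q0[OF i b']] by simp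
    finally show ?thesis .
  qed
  have Q2: "ecoset cs N i (\<psi> i (r \<odot>\<^bsub>cmp M i\<^esub> b)) = ecoset cs N i (r \<odot>\<^bsub>cmp N i\<^esub> \<psi> i b)"
    if i: "i \<in> Iset n" and b: "b \<in> carrier (cmp M i)" for i b r
  proof -
    interpret MM: Module.module fps_ring "cmp M i" using Mm[OF i] .
    have s: "r \<odot>\<^bsub>cmp M i\<^esub> b \<in> carrier (cmp M i)" using b by simp
    have "ecoset cs N i (\<psi> i (r \<odot>\<^bsub>cmp M i\<^esub> b)) = \<phi> i (ecoset cs M i (r \<odot>\<^bsub>cmp M i\<^esub> b))"
      using Q0[OF i s] by simp
    also have "\<dots> = \<phi> i (smult (cmp (Red cs M) i) r (ecoset cs M i b))"
      using red_smult[OF Mm[OF i] b] by simp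
    also have "\<dots> = smult (cmp (Red cs N) i) r (\<phi> i (ecoset cs M i b))"
      using Ph(3)[OF i ecM[OF i b]] .
    also have "\<dots> = smult (cmp (Red cs N) i) r (ecoset cs N i (\<psi> i b))"
      using Q0[OF i b] by simp
    also have "\<dots> = ecoset cs N i (r \<odot>\<^bsub>cmp N i\<^esub> \<psi> i b)"
      using red_smult[OF Nm[OF i], of "\<psi> i b" cs r] conjunct1[OF Q0[OF i b]] by simp
    finally show ?thesis .
  qed
  have Q3: "ecoset cs N i (\<psi> i (bet M i j k x b)) = ecoset cs N i (bet N i j k x (\<psi> j b))"
    if ij: "(i,j) \<in> Om" and k: "k < gg C i j" and x: "x \<in> Rij n cs i j" and b: "b \<in> carrier (cmp M j)" for i j k x b
  proof -
    have ii: "i \<in> Iset n" "j \<in> Iset n" using Om ij by auto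
    have s: "bet M i j k x b \<in> carrier (cmp M i)" using is_hmodD(2)[OF HM ij k x b] .
    have "ecoset cs N i (\<psi> i (bet M i j k x b)) = \<phi> i (ecoset cs M i (bet M i j k x b))"
      using Q0[OF ii(1) s] by simp
    also have "\<dots> = \<phi> i (bet (Red cs M) i j k x (ecoset cs M j b))"
      using red_bet[OF cs HM ij k x b] by simp
    also have "\<dots> = bet (Red cs N) i j k x (\<phi> j (ecoset cs M j b))"
      using Ph(4)[OF ij k x ecM[OF ii(2) b]] .
    also have "\<dots> = bet (Red cs N) i j k x (ecoset cs N j (\<psi> j b))"
      using Q0[OF ii(2) b] by simp
    also have "\<dots> = ecoset cs N i (bet N i j k x (\<psi> j b))"
      using red_bet[OF cs HN ij k x, of "\<psi> j b"] conjunct1[OF Q0[OF ii(2) b]] by simp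
    finally show ?thesis .
  qed
  have psi0: "\<psi> i \<zero>\<^bsub>cmp M i\<^esub> = \<zero>\<^bsub>cmp N i\<^esub>" for i by (simp add: \<psi>_def)
  define S where "S i = {p. fst p \<in> carrier (cmp N i) \<and> snd p \<in> carrier (cmp M i) \<and>
     ecoset cs N i (fst p) = ecoset cs N i (\<psi> i (snd p))}" for i
  define X where "X i = carrier (cmp N i) \<times> carrier (cmp M i)" for i
  define T where "T i p = (\<psi> i (snd p) \<oplus>\<^bsub>cmp N i\<^esub> eps_act cs N i (fst p), snd p)" for i p
  define Ti where "Ti i p = (dv cs N i (fst p \<oplus>\<^bsub>cmp N i\<^esub> \<ominus>\<^bsub>cmp N i\<^esub> \<psi> i (snd p)), snd p)" for i p
  have SS: "\<And>i. i \<in> Iset n \<Longrightarrow> S i \<subseteq> carrier (cmp N i) \<times> carrier (cmp M i)" by (auto simp: S_def)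
  have HP: "is_hmod n C cs Om (pbh N M S)"
  proof (rule is_hmod_pbh[OF HN HM Om SS])
    show "(\<zero>\<^bsub>cmp N i\<^esub>, \<zero>\<^bsub>cmp M i\<^esub>) \<in> S i" if i: "i \<in> Iset n" for i
    proof -
      interpret MM: Module.module fps_ring "cmp M i" using Mm[OF i] .
      interpret NN: Module.module fps_ring "cmp N i" using Nm[OF i] .
      show ?thesis by (simp add: S_def psi0)
    qed
    show "(fst p \<oplus>\<^bsub>cmp N i\<^esub> fst q, snd p \<oplus>\<^bsub>cmp M i\<^esub> snd q) \<in> S i"
      if i: "i \<in> Iset n" and p: "p \<in> S i" and q: "q \<in> S i" for i p q
    proof -
      interpret MM: Module.module fps_ring "cmp M i" using Mm[OF i] .
      interpret NN: Module.module fps_ring "cmp N i" using Nm[OF i] .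
      have pp: "fst p \<in> carrier (cmp N i)" "snd p \<in> carrier (cmp M i)" "ecoset cs N i (fst p) = ecoset cs N i (\<psi> i (snd p))"
        using p by (auto simp: S_def)
      have qq: "fst q \<in> carrier (cmp N i)" "snd q \<in> carrier (cmp M i)" "ecoset cs N i (fst q) = ecoset cs N i (\<psi> i (snd q))"
        using q by (auto simp: S_def)
      have "ecoset cs N i (fst p \<oplus>\<^bsub>cmp N i\<^esub> fst q) = ecoset cs N i (\<psi> i (snd p) \<oplus>\<^bsub>cmp N i\<^esub> \<psi> i (snd q))"
        by (rule cong_add[OF Nm[OF i] pp(1) _ qq(1) _ pp(3) qq(3)]) (use Q0[OF i pp(2)] Q0[OF i qq(2)] in auto)
      also have "\<dots> = ecoset cs N i (\<psi> i (snd p \<oplus>\<^bsub>cmp M i\<^esub> snd q))" using Q1[OF i pp(2) qq(2)] by simp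
      finally show ?thesis using pp qq by (simp add: S_def)
    qed
    show "(r \<odot>\<^bsub>cmp N i\<^esub> fst p, r \<odot>\<^bsub>cmp M i\<^esub> snd p) \<in> S i"
      if i: "i \<in> Iset n" and p: "p \<in> S i" for i r p
    proof -
      interpret MM: Module.module fps_ring "cmp M i" using Mm[OF i] .
      interpret NN: Module.module fps_ring "cmp N i" using Nm[OF i] .
      have pp: "fst p \<in> carrier (cmp N i)" "snd p \<in> carrier (cmp M i)" "ecoset cs N i (fst p) = ecoset cs N i (\<psi> i (snd p))"
        using p by (auto simp: S_def)
      have "ecoset cs N i (r \<odot>\<^bsub>cmp N i\<^esub> fst p) = ecoset cs N i (r \<odot>\<^bsub>cmp N i\<^esub> \<psi> i (snd p))"
        by (rule cong_smult[OF Nm[OF i] pp(1) _ pp(3)]) (use Q0[OF i pp(2)] in auto)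
      also have "\<dots> = ecoset cs N i (\<psi> i (r \<odot>\<^bsub>cmp M i\<^esub> snd p))" using Q2[OF i pp(2)] by simp
      finally show ?thesis using pp by (simp add: S_def)
    qed
    show "(bet N i j k x (fst p), bet M i j k x (snd p)) \<in> S i"
      if ij: "(i,j) \<in> Om" and k: "k < gg C i j" and x: "x \<in> Rij n cs i j" and p: "p \<in> S j" for i j k x p
    proof -
      have ii: "i \<in> Iset n" "j \<in> Iset n" using Om ij by auto
      have pp: "fst p \<in> carrier (cmp N j)" "snd p \<in> carrier (cmp M j)" "ecoset cs N j (fst p) = ecoset cs N j (\<psi> j (snd p))"
        using p by (auto simp: S_def)
      have "ecoset cs N i (bet N i j k x (fst p)) = ecoset cs N i (bet N i j k x (\<psi> j (snd p)))"
        by (rule cong_bet[OF cs HN ij k x pp(1) _ pp(3)]) (use Q0[OF ii(2) pp(2)] in auto)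
      also have "\<dots> = ecoset cs N i (\<psi> i (bet M i j k x (snd p)))" using Q3[OF ij k x pp(2)] by simp
      finally show ?thesis using pp is_hmodD(2)[OF HN ij k x] is_hmodD(2)[OF HM ij k x] by (simp add: S_def)
    qed
  qed
  have carP: "carrier (cmp (pbh N M S) i) = S i" for i by (simp add: pbh_def subprod_def)
  have grp: "(a \<oplus>\<^bsub>cmp N i\<^esub> y) \<oplus>\<^bsub>cmp N i\<^esub> \<ominus>\<^bsub>cmp N i\<^esub> a = y"
    if i: "i \<in> Iset n" and a: "a \<in> carrier (cmp N i)" and y: "y \<in> carrier (cmp N i)" for i a y
  proof -
    interpret NN: Module.module fps_ring "cmp N i" using Nm[OF i] .
    show ?thesis using a y by (metis NN.a_comm NN.r_neg1 NN.a_closed NN.a_inv_closed)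
  qed
  have bij: "\<forall>i\<in>Iset n. bijc (pbh N M S) X T Ti i"
  proof
    fix i assume i: "i \<in> Iset n"
    interpret NN: Module.module fps_ring "cmp N i" using Nm[OF i] .
    have A: "T i u \<in> S i \<and> Ti i (T i u) = u" if u: "u \<in> X i" for u
    proof -
      obtain x m where um: "u = (x, m)" "x \<in> carrier (cmp N i)" "m \<in> carrier (cmp M i)" using u by (auto simp: X_def)
      have pm: "\<psi> i m \<in> carrier (cmp N i)" using Q0[OF i um(3)] by blast
      have ex: "eps_act cs N i x \<in> carrier (cmp N i)" using eps_closed[OF Nm[OF i] um(2)] .
      have e1: "ecoset cs N i (\<psi> i m) = ecoset cs N i (\<psi> i m \<oplus>\<^bsub>cmp N i\<^esub> eps_act cs N i x)"
        using ecoset_eq_iff[where cs=cs, OF Nm[OF i] pm] pm ex um(2) by blast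
      have "T i u \<in> S i" using e1 pm ex um by (simp add: T_def S_def)
      moreover have "Ti i (T i u) = u"
        using grp[OF i pm ex] dv_eps[OF Nm[OF i] Nf[OF i] um(2)] um(1) by (simp add: T_def Ti_def)
      ultimately show ?thesis by blast
    qed
    have B: "Ti i p \<in> X i \<and> T i (Ti i p) = p" if p: "p \<in> S i" for p
    proof -
      obtain a b where pb: "p = (a, b)" "a \<in> carrier (cmp N i)" "b \<in> carrier (cmp M i)"
         "ecoset cs N i a = ecoset cs N i (\<psi> i b)" using p by (cases p) (auto simp: S_def)
      have pm: "\<psi> i b \<in> carrier (cmp N i)" using Q0[OF i pb(3)] by blast
      obtain y where y: "y \<in> carrier (cmp N i)" "a = \<psi> i b \<oplus>\<^bsub>cmp N i\<^esub> eps_act cs N i y"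
        using ecoset_eq_iff[OF Nm[OF i] pm pb(2)] pb(4) by metis
      have ey: "eps_act cs N i y \<in> carrier (cmp N i)" using eps_closed[OF Nm[OF i] y(1)] .
      have "Ti i p = (y, b)"
        using grp[OF i pm ey] dv_eps[OF Nm[OF i] Nf[OF i] y(1)] pb(1) y(2) by (simp add: Ti_def)
      then show ?thesis using y pb by (simp add: X_def T_def)
    qed
    show "bijc (pbh N M S) X T Ti i" unfolding bijc_def carP using A B by blast
  qed
  define E where "E = transh (pbh N M S) X T Ti"
  have HE: "is_hmod n C cs Om E" unfolding E_def by (rule is_hmod_transh[OF HP Om bij])
  have carE: "carrier (cmp E i) = X i" for i by (simp add: E_def transh_def transm_def)
  have incl: "is_hom n C cs Om N E (\<lambda>i x. (x, \<zero>\<^bsub>cmp M i\<^esub>))"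
  proof -
    have h1: "is_hom n C cs Om N (pbh N M S) (\<lambda>i x. (eps_act cs N i x, \<zero>\<^bsub>cmp M i\<^esub>))"
    proof (rule is_hom_into_pbh[OF eps_hom[OF cs HN] zero_hom[OF cs HN HM]])
      fix i q assume i: "i \<in> Iset n" and q: "q \<in> carrier (cmp N i)"
      interpret MM: Module.module fps_ring "cmp M i" using Mm[OF i] .
      interpret NN: Module.module fps_ring "cmp N i" using Nm[OF i] .
      have ex: "eps_act cs N i q \<in> carrier (cmp N i)" using eps_closed[OF Nm[OF i] q] .
      have "ecoset cs N i \<zero>\<^bsub>cmp N i\<^esub> = ecoset cs N i (eps_act cs N i q)"
      proof -
        have "eps_act cs N i q = \<zero>\<^bsub>cmp N i\<^esub> \<oplus>\<^bsub>cmp N i\<^esub> eps_act cs N i q" using ex by simp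
        then show ?thesis using ecoset_eq_iff[where cs=cs, OF Nm[OF i] NN.zero_closed ex] q by blast
      qed
      then show "(eps_act cs N i q, \<zero>\<^bsub>cmp M i\<^esub>) \<in> S i" using ex by (simp add: S_def psi0)
    qed
    have h2: "is_hom n C cs Om N E (\<lambda>i x. Ti i (eps_act cs N i x, \<zero>\<^bsub>cmp M i\<^esub>))"
      unfolding E_def by (rule is_hom_into_transh[OF h1 Om bij])
    show ?thesis
    proof (rule is_hom_cong[OF h2 HN Om])
      fix i m assume i: "i \<in> Iset n" and m: "m \<in> carrier (cmp N i)"
      interpret NN: Module.module fps_ring "cmp N i" using Nm[OF i] .
      have ex: "eps_act cs N i m \<in> carrier (cmp N i)" using eps_closed[OF Nm[OF i] m] .
      have z: "\<ominus>\<^bsub>cmp N i\<^esub> \<zero>\<^bsub>cmp N i\<^esub> = \<zero>\<^bsub>cmp N i\<^esub>"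
        by (metis NN.l_neg NN.r_zero NN.zero_closed NN.a_inv_closed)
      show "(m, \<zero>\<^bsub>cmp M i\<^esub>) = Ti i (eps_act cs N i m, \<zero>\<^bsub>cmp M i\<^esub>)"
      proof -
        have w: "eps_act cs N i m \<oplus>\<^bsub>cmp N i\<^esub> \<ominus>\<^bsub>cmp N i\<^esub> \<zero>\<^bsub>cmp N i\<^esub> = eps_act cs N i m"
          using z ex NN.r_zero by metis
        show ?thesis unfolding Ti_def using w dv_eps[OF Nm[OF i] Nf[OF i] m, of cs] by (simp add: psi0)
      qed
    qed
  qed
  have proj: "is_hom n C cs Om E M (\<lambda>i p. snd p)"
  proof -
    have "is_hom n C cs Om E M (\<lambda>i u. snd (T i u))"
      unfolding E_def by (rule is_hom_from_transh[OF is_hom_pbh_snd[OF SS] HP Om bij])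
    then show ?thesis by (rule is_hom_cong[OF _ HE Om]) (simp add: T_def)
  qed
  have "is_hmod n C cs Om E \<and>
        (\<forall>i\<in>Iset n. carrier (cmp E i) = carrier (cmp N i) \<times> carrier (cmp M i)) \<and>
        is_hom n C cs Om N E (\<lambda>i x. (x, zero (cmp M i))) \<and>
        is_hom n C cs Om E M (\<lambda>i p. snd p)"
    using HE carE incl proj by (simp add: X_def)
  then obtain s where s: "is_hom n C cs Om M E s" "\<forall>i\<in>Iset n. \<forall>m\<in>carrier (cmp M i). snd (s i m) = m"
    using ext unfolding ext1_zero_def by blast
  define f where "f i m = fst (T i (s i m))" for i m
  have fstT: "is_hom n C cs Om E N (\<lambda>i u. fst (T i u))"
    unfolding E_def by (rule is_hom_from_transh[OF is_hom_pbh_fst[OF SS] HP Om bij])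
  have fhom: "is_hom n C cs Om M N f"
    using is_hom_comp[OF s(1) fstT Om] unfolding f_def .
  have fred: "\<phi> i A = red_hom cs N f i A" if i: "i \<in> Iset n" and A: "A \<in> carrier (cmp (Red cs M) i)" for i A
  proof -
    obtain b where b: "b \<in> carrier (cmp M i)" "A = ecoset cs M i b" using A red_carrier[OF Mm[OF i]] by auto
    define m where "m = rep A"
    have m: "m \<in> carrier (cmp M i)" "ecoset cs M i m = A" using rep_ecoset[OF Mm[OF i] b(1)] b(2) m_def by auto
    have u: "s i m \<in> X i" using is_homD(1)[OF s(1) i m(1)] carE by simp
    have u2: "snd (s i m) = m" using s(2) i m(1) by blast
    have u1: "fst (s i m) \<in> carrier (cmp N i)" using u by (auto simp: X_def)
    have pm: "\<psi> i m \<in> carrier (cmp N i)" using Q0[OF i m(1)] by blast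
    have ex: "eps_act cs N i (fst (s i m)) \<in> carrier (cmp N i)" using eps_closed[OF Nm[OF i] u1] .
    have "red_hom cs N f i A = ecoset cs N i (\<psi> i m \<oplus>\<^bsub>cmp N i\<^esub> eps_act cs N i (fst (s i m)))"
      unfolding red_hom_def f_def T_def m_def[symmetric] using u2 by simp
    also have "\<dots> = ecoset cs N i (\<psi> i m)"
    proof -
      interpret NN: Module.module fps_ring "cmp N i" using Nm[OF i] .
      have c: "\<psi> i m \<oplus>\<^bsub>cmp N i\<^esub> eps_act cs N i (fst (s i m)) \<in> carrier (cmp N i)" using pm ex by simp
      have "ecoset cs N i (\<psi> i m) = ecoset cs N i (\<psi> i m \<oplus>\<^bsub>cmp N i\<^esub> eps_act cs N i (fst (s i m)))"
        using ecoset_eq_iff[where cs=cs, OF Nm[OF i] pm c] u1 by blast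
      then show ?thesis by simp
    qed
    also have "\<dots> = \<phi> i A" using Q0[OF i m(1)] m(2) by simp
    finally show ?thesis by simp
  qed
  show ?thesis using fhom fred by blast
qed

theorem lemma5p11:
  fixes n :: nat and C :: "nat \<Rightarrow> nat \<Rightarrow> int" and cs :: "nat \<Rightarrow> nat"
    and Om :: "(nat \<times> nat) set"
    and M :: "('f::field, 'm) hmod" and N :: "('f, 'n) hmod"
  assumes "cartan_setup n C cs Om"
    and "is_hmod n C cs Om M" and "is_hmod n C cs Om N"
    and "locally_free n M" and "locally_free n N"
    and "ext1_zero n C cs Om M N"
  shows
    \<comment> \<open>injectivity of F \<otimes> Hom(M,N) = Hom(M,N)/eps Hom(M,N) \<rightarrow> Hom_H(Red M, Red N)\<close>
    "(\<forall>f. is_hom n C cs Om M N f \<and>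
          (\<forall>i\<in>Iset n. \<forall>A\<in>carrier (cmp (Red cs M) i).
              red_hom cs N f i A = zero (cmp (Red cs N) i))
       \<longrightarrow> (\<exists>g. is_hom n C cs Om M N g \<and>
              (\<forall>i\<in>Iset n. \<forall>m\<in>carrier (cmp M i). f i m = eps_act cs N i (g i m))))
     \<and>
     \<comment> \<open>surjectivity\<close>
     (\<forall>\<phi>. is_hom n C cs Om (Red cs M) (Red cs N) \<phi>
       \<longrightarrow> (\<exists>f. is_hom n C cs Om M N f \<and>
              (\<forall>i\<in>Iset n. \<forall>A\<in>carrier (cmp (Red cs M) i). \<phi> i A = red_hom cs N f i A)))"
  apply (intro conjI allI impI)
   apply (rule inj_part[OF assms(1,2,3,5)]; blast)
  apply (rule surj_part[OF assms(1,2,3,5,6)]; assumption)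
  done

end
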